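(* In the setting described in the context, for every $0\le j\le\textsc{m}$: (i) $\tilde{\textsc{e}}_j=\textsc{e}_j$ and $\tilde{\mathbf f}(\textsc{e}_j)=\epsilon_j\,\mathbf J\,\mathbf f(\textsc{e}_j)$, where $\epsilon_j=\tilde p_{\textsc{m}}(\textsc{e}_j)/(a_1\cdots a_{\textsc{m}})$; (ii) with $\tilde\epsilon_j=p_{\textsc{m}}(\textsc{e}_j)/(\tilde a_1\cdots\tilde a_{\textsc{m}})$ one has $\epsilon_j\tilde\epsilon_j=1$ and $\mathrm{Sign}(\epsilon_j)=\mathrm{Sign}(\tilde\epsilon_j)=(-1)^j$.
   Context: Fix $0<p<1$ and the Jacobi theta functions $\theta_1(z)=2p^{1/4}\sin z\prod_{n\ge1}(1-p^{2n})(1-2p^{2n}\cos 2z+p^{4n})$, $\theta_2(z)=2p^{1/4}\cos z\prod_{n\ge1}(1-p^{2n})(1+2p^{2n}\cos 2z+p^{4n})$, $\theta_3(z)=\prod_{n\ge1}(1-p^{2n})(1+2p^{2n-1}\cos 2z+p^{4n-2})$, $\theta_4(z)=\prod_{n\ge1}(1-p^{2n})(1-2p^{2n-1}\cos 2z+p^{4n-2})$. For $\alpha>0$ set $[z]_1=\theta_1(\frac{\alpha}{2}z)/(\frac{\alpha}{2}\theta_1'(0))$, $[z]_r=\theta_r(\frac{\alpha}{2}z)/\theta_r(0)$ ($r=2,3,4$). Parameters: real $u_1,\dots,u_4,v_1,\dots,v_4$ with $u_r>0$, $|v_r|<u_r+\frac12$ for $r=1,2$; $\textsc{m}\in\mathbb{N}$;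 $\alpha=\pi/(u_1+u_2+\textsc{m})$; a real $u$ with $u,u+1\notin\frac{2\pi}{\alpha}\mathbb{Z}$. Let $\pi_1=\mathrm{id}$, $\pi_2=(12)(34)$, $\pi_3=(13)(24)$, $\pi_4=(14)(23)$ in $S_4$, and $c_r=\frac{2}{[u]_1[u+1]_1}\prod_{s=1}^4[u_{\pi_r(s)}-\frac12]_s[v_{\pi_r(s)}]_s$. For integers $k$ define $a_k=\prod_{r=1}^4\frac{[u_1-u_r+k]_r[u_1-v_r-\frac12+k]_r}{[u_1+k]_r[u_1-\frac12+k]_r}$, $\tilde a_k=\prod_{r=1}^4\frac{[u_2-u_{\pi_2(r)}+k]_r[u_2-v_{\pi_2(r)}-\frac12+k]_r}{[u_2+k]_r[u_2-\frac12+k]_r}$, $b_k=\sum_{r=1}^4c_r\frac{[u_1+k+\frac12+u]_r[u_1+k-\frac12-u]_r}{[u_1+k+\frac12]_r[u_1+k-\frac12]_r}$ (the numbers $a_k,\tilde a_k$, $1\le k\le\textsc{m}$, are positive). Let $\mathbf H$ be the $(\textsc{m}+1)\times(\textsc{m}+1)$ tridiagonal matrix with rows/columns indexed by $0,\dots,\textsc{m}$, $H_{k,k}=b_k$, $H_{k,k-1}=a_k$ ($1\le k\le\textsc{m}$), $H_{k,k+1}=\tilde a_{\textsc{m}-k}$ ($0\le k\le\textsc{m}-1$), all other entries $0$; its eigenvalues are real and simple, denoted $\textsc{e}_0>\textsc{e}_1>\cdots>\textsc{e}_{\textsc{m}}$. The monic elliptic Racah polynomials are $p_0(\textsc{e})=1$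 and, for $1\le k\le\textsc{m}+1$, $p_k(\textsc{e})$ = the determinant of the upper-left $k\times k$ submatrix of $\textsc{e}\mathbf I_{\textsc{m}+1}-\mathbf H$. Put $\mathbf f(\textsc{e})=(f_0(\textsc{e}),\dots,f_{\textsc{m}}(\textsc{e}))^T$ with $f_k(\textsc{e})=p_k(\textsc{e})\prod_{0\le j<k}\tilde a_{\textsc{m}-j}^{-1}$. For any quantity $X$ depending on the parameters, $\tilde X$ (or $\pi_2(X)$) denotes the same quantity with the parameters permuted by $\pi_2$, i.e. $u_s\mapsto u_{\pi_2(s)}$, $v_s\mapsto v_{\pi_2(s)}$ (so $(u_1,v_1)\leftrightarrow(u_2,v_2)$, $(u_3,v_3)\leftrightarrow(u_4,v_4)$); in particular $\tilde{\textsc{e}}_j$, $\tilde{\mathbf f}$, $\tilde p_k$ (and indeed $\pi_2(a_k)=\tilde a_k$). $\mathbf J$ is the $(\textsc{m}+1)\times(\textsc{m}+1)$ matrix with ones on the anti-diagonal and zeros elsewhere. *)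

theory Defs
  imports "HOL-Analysis.Infinite_Products" "Jordan_Normal_Form.Char_Poly"
begin

definition theta1 :: "real \<Rightarrow> real \<Rightarrow> real" where
  "theta1 p z = 2 * p powr (1/4) * sin z *
     (\<Prod>n. (1 - p^(2*Suc n)) * (1 - 2 * p^(2*Suc n) * cos (2*z) + p^(4*Suc n)))"

definition theta2 :: "real \<Rightarrow> real \<Rightarrow> real" where
  "theta2 p z = 2 * p powr (1/4) * cos z *
     (\<Prod>n. (1 - p^(2*Suc n)) * (1 + 2 * p^(2*Suc n) * cos (2*z) + p^(4*Suc n)))"

text \<open>For n \<ge> 1: p^(2n-1) and p^(4n-2); here reindexed with n = m+1.\<close>
definition theta3 :: "real \<Rightarrow> real \<Rightarrow> real" where
  "theta3 p z = (\<Prod>n. (1 - p^(2*Suc n)) * (1 + 2 * p^(2*n+1) * cos (2*z) + p^(4*n+2)))"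

definition theta4 :: "real \<Rightarrow> real \<Rightarrow> real" where
  "theta4 p z = (\<Prod>n. (1 - p^(2*Suc n)) * (1 - 2 * p^(2*n+1) * cos (2*z) + p^(4*n+2)))"

definition theta :: "nat \<Rightarrow> real \<Rightarrow> real \<Rightarrow> real" where
  "theta r p z = (if r = 1 then theta1 p z else if r = 2 then theta2 p z
                  else if r = 3 then theta3 p z else theta4 p z)"

definition brk :: "real \<Rightarrow> real \<Rightarrow> nat \<Rightarrow> real \<Rightarrow> real" where
  "brk p \<alpha> r z = (if r = 1 then theta1 p (\<alpha>/2 * z) / (\<alpha>/2 * deriv (theta1 p) 0)
                   else theta r p (\<alpha>/2 * z) / theta r p 0)"

definition alpha :: "(nat \<Rightarrow> real) \<Rightarrow> nat \<Rightarrow> real" where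
  "alpha u M = pi / (u 1 + u 2 + real M)"

definition piperm :: "nat \<Rightarrow> nat \<Rightarrow> nat" where
  "piperm r s =
    (if r = 2 then (if s = 1 then 2 else if s = 2 then 1 else if s = 3 then 4 else if s = 4 then 3 else s)
     else if r = 3 then (if s = 1 then 3 else if s = 3 then 1 else if s = 2 then 4 else if s = 4 then 2 else s)
     else if r = 4 then (if s = 1 then 4 else if s = 4 then 1 else if s = 2 then 3 else if s = 3 then 2 else s)
     else s)"

text \<open>Arguments: nome p, u, v (indexed 1..4), M, spectral parameter w (the paper's u).\<close>

definition cc :: "real \<Rightarrow> (nat \<Rightarrow> real) \<Rightarrow> (nat \<Rightarrow> real) \<Rightarrow> nat \<Rightarrow> real \<Rightarrow> nat \<Rightarrow> real" where
  "cc p u v M w r = (let br = brk p (alpha u M) in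
     2 / (br 1 w * br 1 (w + 1)) *
     (\<Prod>s\<in>{1..4}. br s (u (piperm r s) - 1/2) * br s (v (piperm r s))))"

definition acoef :: "real \<Rightarrow> (nat \<Rightarrow> real) \<Rightarrow> (nat \<Rightarrow> real) \<Rightarrow> nat \<Rightarrow> int \<Rightarrow> real" where
  "acoef p u v M k = (let br = brk p (alpha u M) in
     (\<Prod>r\<in>{1..4}. br r (u 1 - u r + k) * br r (u 1 - v r - 1/2 + k)
                   / (br r (u 1 + k) * br r (u 1 - 1/2 + k))))"

definition twist :: "(nat \<Rightarrow> real) \<Rightarrow> nat \<Rightarrow> real" where
  "twist u = u \<circ> piperm 2"

definition atil :: "real \<Rightarrow> (nat \<Rightarrow> real) \<Rightarrow> (nat \<Rightarrow> real) \<Rightarrow> nat \<Rightarrow> int \<Rightarrow> real" where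
  "atil p u v M k = acoef p (twist u) (twist v) M k"

definition bcoef :: "real \<Rightarrow> (nat \<Rightarrow> real) \<Rightarrow> (nat \<Rightarrow> real) \<Rightarrow> nat \<Rightarrow> real \<Rightarrow> int \<Rightarrow> real" where
  "bcoef p u v M w k = (let br = brk p (alpha u M) in
     (\<Sum>r\<in>{1..4}. cc p u v M w r * br r (u 1 + k + 1/2 + w) * br r (u 1 + k - 1/2 - w)
                   / (br r (u 1 + k + 1/2) * br r (u 1 + k - 1/2))))"

definition Hent :: "real \<Rightarrow> (nat \<Rightarrow> real) \<Rightarrow> (nat \<Rightarrow> real) \<Rightarrow> nat \<Rightarrow> real \<Rightarrow> nat \<Rightarrow> nat \<Rightarrow> real" where
  "Hent p u v M w i j =
     (if i = j then bcoef p u v M w (int i)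
      else if i = j + 1 \<and> 1 \<le> i \<and> i \<le> M then acoef p u v M (int i)
      else if j = i + 1 \<and> i + 1 \<le> M then atil p u v M (int M - int i)
      else 0)"

definition Hmat :: "real \<Rightarrow> (nat \<Rightarrow> real) \<Rightarrow> (nat \<Rightarrow> real) \<Rightarrow> nat \<Rightarrow> real \<Rightarrow> real mat" where
  "Hmat p u v M w = mat (M+1) (M+1) (\<lambda>(i,j). Hent p u v M w i j)"

definition Eig :: "real \<Rightarrow> (nat \<Rightarrow> real) \<Rightarrow> (nat \<Rightarrow> real) \<Rightarrow> nat \<Rightarrow> real \<Rightarrow> nat \<Rightarrow> real" where
  "Eig p u v M w j = rev (sorted_list_of_set {e. eigenvalue (Hmat p u v M w) e}) ! j"

definition ppoly :: "real \<Rightarrow> (nat \<Rightarrow> real) \<Rightarrow> (nat \<Rightarrow> real) \<Rightarrow> nat \<Rightarrow> real \<Rightarrow> nat \<Rightarrow> real \<Rightarrow> real" where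
  "ppoly p u v M w k E = det (mat k k (\<lambda>(i,j). (if i = j then E else 0) - Hent p u v M w i j))"

definition fvec :: "real \<Rightarrow> (nat \<Rightarrow> real) \<Rightarrow> (nat \<Rightarrow> real) \<Rightarrow> nat \<Rightarrow> real \<Rightarrow> nat \<Rightarrow> real \<Rightarrow> real" where
  "fvec p u v M w k E = ppoly p u v M w k E * (\<Prod>j<k. inverse (atil p u v M (int M - int j)))"

end

theory Submission
  imports Defs "HOL-Analysis.Derivative" "HOL-Analysis.Uniform_Limit"
begin


definition Dm :: "(nat \<Rightarrow> nat \<Rightarrow> real) \<Rightarrow> nat \<Rightarrow> real \<Rightarrow> real mat" where
  "Dm h n x = mat n n (\<lambda>(i,j). (if i = j then x else 0) - h i j)"

lemma Dm_carrier[simp]: "Dm h n x \<in> carrier_mat n n"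
  by (simp add: Dm_def)

lemma det_Dm_rec:
  assumes tri: "\<And>i j. Suc i < j \<Longrightarrow> h i j = 0" "\<And>i j. Suc j < i \<Longrightarrow> h i j = 0"
  shows "det (Dm h (Suc (Suc n)) x) = (x - h (Suc n) (Suc n)) * det (Dm h (Suc n) x)
           - h (Suc n) n * h n (Suc n) * det (Dm h n x)"
proof -
  let ?A = "Dm h (Suc (Suc n)) x"
  have "det ?A = (\<Sum>i<Suc (Suc n). ?A $$ (i, Suc n) * cofactor ?A i (Suc n))"
    by (rule laplace_expansion_column[OF Dm_carrier]) simp
  also have "\<dots> = (\<Sum>i<n. ?A $$ (i, Suc n) * cofactor ?A i (Suc n))
       + ?A $$ (n, Suc n) * cofactor ?A n (Suc n) + ?A $$ (Suc n, Suc n) * cofactor ?A (Suc n) (Suc n)"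
    by simp
  also have "(\<Sum>i<n. ?A $$ (i, Suc n) * cofactor ?A i (Suc n)) = 0"
    by (rule sum.neutral) (auto simp: Dm_def tri)
  also have "cofactor ?A (Suc n) (Suc n) = det (Dm h (Suc n) x)"
  proof -
    have "mat_delete ?A (Suc n) (Suc n) = Dm h (Suc n) x"
      by (rule eq_matI) (auto simp: mat_delete_def Dm_def)
    then show ?thesis by (simp add: cofactor_def)
  qed
  also have "cofactor ?A n (Suc n) = - det (mat_delete ?A n (Suc n))"
    by (simp add: cofactor_def)
  also have "det (mat_delete ?A n (Suc n)) = - h (Suc n) n * det (Dm h n x)"
  proof -
    let ?B = "mat_delete ?A n (Suc n)"
    have B: "?B \<in> carrier_mat (Suc n) (Suc n)"
      using mat_delete_carrier[OF Dm_carrier[of h "Suc (Suc n)" x]] by simp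
    have "det ?B = (\<Sum>j<Suc n. ?B $$ (n, j) * cofactor ?B n j)"
      by (rule laplace_expansion_row[OF B]) simp
    also have "\<dots> = (\<Sum>j<n. ?B $$ (n, j) * cofactor ?B n j) + ?B $$ (n, n) * cofactor ?B n n"
      by simp
    also have "(\<Sum>j<n. ?B $$ (n, j) * cofactor ?B n j) = 0"
      by (rule sum.neutral) (auto simp: Dm_def mat_delete_def tri)
    also have "?B $$ (n, n) = - h (Suc n) n"
      by (simp add: Dm_def mat_delete_def)
    also have "mat_delete ?B n n = Dm h n x"
      by (rule eq_matI) (auto simp: mat_delete_def Dm_def)
    then have "cofactor ?B n n = det (Dm h n x)"
      by (simp add: cofactor_def)
    finally show ?thesis by simp
  qed
  finally show ?thesis
    by (simp add: Dm_def algebra_simps)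
qed


lemma roots_prod_dvd:
  fixes P :: "real poly"
  assumes "finite Z" "\<forall>z\<in>Z. poly P z = 0"
  shows "(\<Prod>z\<in>Z. [:-z,1:]) dvd P"
  using assms
proof (induction Z arbitrary: P rule: finite_induct)
  case empty
  then show ?case by simp
next
  case (insert z S)
  have "[:-z,1:] dvd P" using insert.prems poly_eq_0_iff_dvd by blast
  then obtain Q where Q: "P = [:-z,1:] * Q" by (elim dvdE)
  have "\<forall>s\<in>S. poly Q s = 0"
  proof
    fix s assume s: "s \<in> S"
    then have "poly P s = 0" using insert.prems by auto
    moreover have "s \<noteq> z" using s insert.hyps by auto
    ultimately show "poly Q s = 0" by (auto simp: Q)
  qed
  then have "(\<Prod>z\<in>S. [:-z,1:]) dvd Q" using insert.IH by blast
  then have "[:-z,1:] * (\<Prod>z\<in>S. [:-z,1:]) dvd [:-z,1:] * Q" by (rule mult_dvd_mono[OF dvd_refl])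
  then show ?case using insert.hyps Q by simp
qed

lemma monic_roots_prod:
  fixes P :: "real poly"
  assumes lc: "lead_coeff P = 1" and fin: "finite Z" and Zr: "\<forall>z\<in>Z. poly P z = 0"
    and card: "card Z = degree P"
  shows "poly P x = (\<Prod>z\<in>Z. x - z)"
proof -
  let ?Q = "(\<Prod>z\<in>Z. [:-z,1:])"
  obtain R where R: "P = ?Q * R" using roots_prod_dvd[OF fin Zr] by (elim dvdE)
  have P0: "P \<noteq> 0" using lc by auto
  have degQ: "degree ?Q = card Z"
    by (subst degree_prod_eq_sum_degree) auto
  have lcQ: "lead_coeff ?Q = 1"
    by (simp add: lead_coeff_prod)
  have R0: "R \<noteq> 0" using P0 R by auto
  have Q0: "?Q \<noteq> 0" using lcQ by auto
  have "degree P = degree ?Q + degree R" using R degree_mult_eq[OF Q0 R0] by simp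
  then have dR: "degree R = 0" using degQ card by simp
  have "lead_coeff P = lead_coeff ?Q * lead_coeff R" using R by (simp add: lead_coeff_mult)
  then have "lead_coeff R = 1" using lc lcQ by simp
  moreover obtain a where "R = [:a:]" using dR by (elim degree_eq_zeroE)
  ultimately have "R = 1" by (simp add: one_pCons)
  then show ?thesis using R by (simp add: poly_prod)
qed

lemma monic_pinfty:
  fixes P :: "real poly"
  assumes "lead_coeff P = 1"
  shows "\<exists>R. \<forall>x\<ge>R. poly P x > 0"
  using poly_pinfty_gt_lc[of P] assms by force

lemma monic_minfty:
  fixes P :: "real poly"
  assumes "lead_coeff P = 1" "degree P = n"
  shows "\<exists>L. \<forall>x\<le>L. sgn (poly P x) = (-1)^n"
proof -
  let ?Q = "Polynomial.smult ((-1::real)^n) (pcompose P [:0,-1:])"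
  have "lead_coeff (pcompose P [:0,-1:]) = (-1)^n"
    using assms by (subst lead_coeff_comp) auto
  then have "lead_coeff ?Q = 1" by (simp add: power_mult_distrib[symmetric])
  then obtain R where R: "\<forall>x\<ge>R. poly ?Q x > 0" using monic_pinfty by blast
  show ?thesis
  proof (intro exI allI impI)
    fix x :: real assume "x \<le> -R"
    then have "poly ?Q (-x) > 0" using R by auto
    then have "(-1)^n * poly P x > 0" by (simp add: poly_pcompose)
    then show "sgn (poly P x) = (-1)^n"
      by (cases "even n") (auto simp: sgn_if zero_less_mult_iff)
  qed
qed

lemma sgn_prod_real:
  fixes f :: "'a \<Rightarrow> real"
  shows "finite A \<Longrightarrow> sgn (prod f A) = (\<Prod>x\<in>A. sgn (f x))"
  by (induction A rule: finite_induct) (simp_all add: sgn_mult)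

lemma sgn_prod_roots:
  fixes Z :: "real set"
  assumes "finite Z" "x \<notin> Z"
  shows "sgn (\<Prod>z\<in>Z. x - z) = (-1) ^ card {z\<in>Z. x < z}"
proof -
  have "sgn (\<Prod>z\<in>Z. x - z) = (\<Prod>z\<in>Z. sgn (x - z))" using assms(1) by (simp add: sgn_prod_real)
  also have "\<dots> = (\<Prod>z\<in>Z. if x < z then -1 else 1)"
    using assms by (intro prod.cong) (auto simp: sgn_if)
  also have "\<dots> = (-1) ^ card {z\<in>Z. x < z}"
    using assms(1) by (simp add: prod.If_cases Int_def)
  finally show ?thesis .
qed


lemma enum_finite:
  fixes S :: "real set"
  assumes "finite S" "card S = k"
  shows "\<exists>y. (\<forall>i j. i < j \<longrightarrow> j < k \<longrightarrow> y i < y j) \<and> S = y ` {..<k}"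
proof -
  let ?ys = "sorted_list_of_set S"
  have len: "length ?ys = k" using assms by simp
  have st: "sorted_wrt (<) ?ys" by simp
  have set: "set ?ys = S" using assms by simp
  show ?thesis
  proof (intro exI conjI allI impI)
    fix i j assume "i < j" "j < k"
    then show "?ys ! i < ?ys ! j" using sorted_wrt_nth_less[OF st] len by auto
  next
    show "S = (!) ?ys ` {..<k}" using set len by (auto simp: set_conv_nth)
  qed
qed

lemma mono_less_iff:
  fixes f :: "nat \<Rightarrow> real"
  assumes "\<And>i j. i < j \<Longrightarrow> j < n \<Longrightarrow> f i < f j" "i < n" "j < n"
  shows "f i < f j \<longleftrightarrow> i < j"
proof
  assume h: "f i < f j"
  show "i < j"
  proof (rule ccontr)
    assume "\<not> i < j"
    then have "j < i \<or> j = i" by auto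
    then show False using assms(1)[of j i] assms(2) h by auto
  qed
qed (use assms in auto)

lemma card_filter_image:
  assumes "inj_on f A"
  shows "card {v \<in> f ` A. P v} = card {a \<in> A. P (f a)}"
proof -
  have "{v \<in> f ` A. P v} = f ` {a \<in> A. P (f a)}" by auto
  moreover have "inj_on f {a \<in> A. P (f a)}" using assms by (rule inj_on_subset) auto
  ultimately show ?thesis by (simp add: card_image)
qed

lemma ivt_strict:
  fixes f :: "real \<Rightarrow> real"
  assumes "a < b" "f a * f b < 0" "continuous_on {a..b} f"
  shows "\<exists>z. a < z \<and> z < b \<and> f z = 0"
proof (cases "f a < 0")
  case True
  then have "f b > 0" using assms(2) by (auto simp: mult_less_0_iff)
  then obtain z where "a \<le> z" "z \<le> b" "f z = 0" using IVT'[of f a 0 b] True assms by auto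
  then show ?thesis using True \<open>f b > 0\<close> by (intro exI[of _ z]) (auto simp: order.order_iff_strict)
next
  case False
  then have "f a > 0" "f b < 0" using assms(2) by (auto simp: mult_less_0_iff)
  then obtain z where "a \<le> z" "z \<le> b" "f z = 0" using IVT2'[of f b 0 a] assms by auto
  then show ?thesis using \<open>f a > 0\<close> \<open>f b < 0\<close> by (intro exI[of _ z]) (auto simp: order.order_iff_strict)
qed

definition rootsD :: "(nat \<Rightarrow> real \<Rightarrow> real) \<Rightarrow> nat \<Rightarrow> real set" where "rootsD D k = {x. D k x = 0}"

definition SInv :: "(nat \<Rightarrow> real \<Rightarrow> real) \<Rightarrow> nat \<Rightarrow> bool" where "SInv D k \<longleftrightarrow> finite (rootsD D k) \<and> card (rootsD D k) = k \<and> (\<forall>x. D k x = (\<Prod>z\<in>rootsD D k. x - z))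
   \<and> (\<forall>z\<in>rootsD D k. sgn (D (k - 1) z) = (-1) ^ card {y\<in>rootsD D k. z < y})"

context
  fixes D :: "nat \<Rightarrow> real \<Rightarrow> real" and b c :: "nat \<Rightarrow> real" and N :: nat
  assumes D0: "\<And>x. D 0 x = 1"
    and D1: "\<And>x. D 1 x = x - b 0"
    and Drec: "\<And>k x. Suc (Suc k) \<le> N \<Longrightarrow> D (Suc (Suc k)) x = (x - b (Suc k)) * D (Suc k) x - c k * D k x"
    and cpos: "\<And>k. Suc (Suc k) \<le> N \<Longrightarrow> c k > 0"
    and Dpoly: "\<And>k. k \<le> N \<Longrightarrow> \<exists>P. lead_coeff P = 1 \<and> degree P = k \<and> (\<forall>x. D k x = poly P x)"
begin

lemma SInv1: "SInv D 1"
proof -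
  have D1': "\<And>x. D (Suc 0) x = x - b 0" using D1 by simp
  have Z: "rootsD D 1 = {b 0}" by (auto simp: rootsD_def D1')
  have e: "{y. y = b 0 \<and> b 0 < y} = {}" by auto
  show ?thesis unfolding SInv_def Z by (auto simp: D1' D0 e)
qed

lemma SInv_step:
  assumes k1: "1 \<le> k" and kN: "Suc k \<le> N" and I: "SInv D k"
  shows "SInv D (Suc k)"
proof -
  obtain P where lcP: "lead_coeff P = 1" and dP: "degree P = Suc k" and DP: "\<And>x. D (Suc k) x = poly P x"
    using Dpoly[OF kN] by blast
  have P0: "P \<noteq> 0" using lcP by auto
  have ZP: "rootsD D (Suc k) = {x. poly P x = 0}" by (simp add: rootsD_def DP)
  have finZ: "finite (rootsD D (Suc k))" unfolding ZP using poly_roots_finite[OF P0] .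
  have cardZle: "card (rootsD D (Suc k)) \<le> Suc k" unfolding ZP using card_poly_roots_bound[OF P0] dP by simp
  from I have finY: "finite (rootsD D k)" and cardY: "card (rootsD D k) = k"
    and prodY: "\<And>x. D k x = (\<Prod>z\<in>rootsD D k. x - z)"
    and sgnY: "\<And>z. z \<in> rootsD D k \<Longrightarrow> sgn (D (k - 1) z) = (-1) ^ card {y\<in>rootsD D k. z < y}"
    unfolding SInv_def by auto
  obtain y where ymono: "\<And>i j. i < j \<Longrightarrow> j < k \<Longrightarrow> y i < y j" and Yeq: "rootsD D k = y ` {..<k}"
    using enum_finite[OF finY cardY] by blast
  have yinj: "inj_on y {..<k}"
    by (rule inj_onI) (metis lessThan_iff linorder_neqE_nat order_less_irrefl ymono)
  have cabove: "card {v\<in>rootsD D k. y i < v} = k - 1 - i" if "i < k" for i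
  proof -
    have "card {v\<in>rootsD D k. y i < v} = card {j\<in>{..<k}. y i < y j}"
      unfolding Yeq by (rule card_filter_image[OF yinj])
    also have "{j\<in>{..<k}. y i < y j} = {i<..<k}"
    proof (rule equalityI; rule subsetI)
      fix j assume "j \<in> {j\<in>{..<k}. y i < y j}"
      then have j: "j < k" "y i < y j" by auto
      then have "i < j" using mono_less_iff[of k y i j, OF ymono] that by blast
      then show "j \<in> {i<..<k}" using j by simp
    next
      fix j assume "j \<in> {i<..<k}"
      then have "i < j" "j < k" by auto
      then show "j \<in> {j\<in>{..<k}. y i < y j}" using ymono[of i j] by simp
    qed
    finally show ?thesis by simp
  qed
  have Drec': "D (Suc k) x = (x - b k) * D k x - c (k - 1) * D (k - 1) x" for x
    using Drec[of "k - 1" x] kN k1 by simp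
  have cp: "c (k - 1) > 0" using cpos[of "k - 1"] kN k1 by simp
  have sgnyk: "sgn (D (Suc k) (y i)) = (-1) ^ (k - i)" if "i < k" for i
  proof -
    have yi: "y i \<in> rootsD D k" using that Yeq by auto
    then have "D k (y i) = 0" by (simp add: rootsD_def)
    then have "D (Suc k) (y i) = - c (k - 1) * D (k - 1) (y i)" by (simp add: Drec')
    then have "sgn (D (Suc k) (y i)) = - sgn (D (k - 1) (y i))" using cp by (simp add: sgn_mult)
    also have "\<dots> = - ((-1) ^ (k - 1 - i))" using sgnY[OF yi] cabove[OF that] by simp
    also have "\<dots> = (-1) ^ (k - i)"
    proof -
      have "k - i = Suc (k - 1 - i)" using that by simp
      then show ?thesis by simp
    qed
    finally show ?thesis .
  qed
  obtain R where R: "\<And>x. x \<ge> R \<Longrightarrow> D (Suc k) x > 0" using monic_pinfty[OF lcP] DP by metis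
  obtain L where L: "\<And>x. x \<le> L \<Longrightarrow> sgn (D (Suc k) x) = (-1) ^ Suc k" using monic_minfty[OF lcP dP] DP by metis
  define t where "t i = (if i = 0 then min L (y 0 - 1) else if i \<le> k then y (i - 1) else max R (y (k - 1) + 1))" for i
  have tmono: "t i < t j" if "i < j" "j \<le> Suc k" for i j
  proof -
    have y0: "y 0 \<le> y m" if "m < k" for m using ymono[of 0 m] that by (cases m) auto
    have yk: "y m \<le> y (k - 1)" if "m < k" for m using ymono[of m "k - 1"] that by (cases "m = k - 1") force+
    have t0: "t 0 < y 0" by (simp add: t_def)
    have tS: "y (k - 1) < t (Suc k)" by (simp add: t_def)
    show ?thesis
    proof (cases "i = 0")
      case True
      show ?thesis
      proof (cases "j \<le> k")
        case True2: True
        then have "t j = y (j - 1)" using that by (simp add: t_def)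
        moreover have "j - 1 < k" using True2 that by linarith
        moreover have "y 0 \<le> y (j - 1)" using y0 \<open>j - 1 < k\<close> by blast
        ultimately show ?thesis using True t0 by simp
      next
        case False
        then have "j = Suc k" using that by simp
        then show ?thesis using True y0[of "k - 1"] t0 tS k1 by simp
      qed
    next
      case False
      then have ti: "t i = y (i - 1)" "i - 1 < k" using that by (auto simp: t_def)
      show ?thesis
      proof (cases "j \<le> k")
        case True2: True
        then have "t j = y (j - 1)" using that by (simp add: t_def)
        then show ?thesis using ti ymono[of "i - 1" "j - 1"] False that True2 by simp
      next
        case False2: False
        then have "j = Suc k" using that by simp
        then show ?thesis using ti yk[of "i - 1"] tS by simp
      qed
    qed
  qed
  have tmono': "t i \<le> t j" if "i \<le> j" "j \<le> Suc k" for i j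
    using tmono[of i j] that by (cases "i = j") auto
  have sgnt: "sgn (D (Suc k) (t i)) = (-1) ^ (Suc k - i)" if iS: "i \<le> Suc k" for i
  proof -
    consider "i = 0" | "1 \<le> i" "i \<le> k" | "i = Suc k" using iS by force
    then show ?thesis
    proof cases
      case 1 then show ?thesis using L by (simp add: t_def)
    next
      case 2
      then have "t i = y (i - 1)" by (simp add: t_def)
      then show ?thesis using sgnyk[of "i - 1"] 2 by (simp add: Suc_diff_le)
    next
      case 3
      then have "t i \<ge> R" by (simp add: t_def)
      then show ?thesis using R 3 by simp
    qed
  qed
  have contD: "continuous_on S (D (Suc k))" for S unfolding DP[abs_def]
    by (intro continuous_intros)
  have ex: "\<exists>z. t i < z \<and> z < t (Suc i) \<and> D (Suc k) z = 0" if True: "i \<le> k" for i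
  proof -
    have s1: "sgn (D (Suc k) (t i)) = (-1) ^ (Suc k - i)" using sgnt True by simp
    have s2: "sgn (D (Suc k) (t (Suc i))) = (-1) ^ (k - i)" using sgnt[of "Suc i"] True by simp
    have e: "(-1::real) ^ (Suc k - i) = - ((-1) ^ (k - i))" using True by (simp add: Suc_diff_le)
    have s3: "sgn (D (Suc k) (t i)) = - sgn (D (Suc k) (t (Suc i)))" using s1 s2 e by simp
    have s4: "sgn (D (Suc k) (t (Suc i))) \<noteq> 0" using s2 by simp
    have neg: "D (Suc k) (t i) * D (Suc k) (t (Suc i)) < 0"
      using s3 s4 by (auto simp: sgn_if mult_less_0_iff split: if_splits)
    have tl: "t i < t (Suc i)" using tmono[of i "Suc i"] True by simp
    show ?thesis using ivt_strict[OF tl neg contD] .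
  qed
  define zf where "zf i = (SOME z. t i < z \<and> z < t (Suc i) \<and> D (Suc k) z = 0)" for i
  have zf: "t i < zf i \<and> zf i < t (Suc i) \<and> D (Suc k) (zf i) = 0" if "i \<le> k" for i
    unfolding zf_def by (rule someI_ex[OF ex[OF that]])
  have zmono: "zf i < zf j" if "i < j" "j \<le> k" for i j
  proof -
    have "zf i < t (Suc i)" using zf[of i] that by simp
    moreover have "t (Suc i) \<le> t j" using tmono'[of "Suc i" j] that by simp
    moreover have "t j < zf j" using zf[of j] that by simp
    ultimately show ?thesis by linarith
  qed
  have zmono2: "zf i < zf j" if "i < j" "j < Suc k" for i j using zmono that by simp
  have zinj: "inj_on zf {..k}"
    by (rule inj_onI) (metis atMost_iff linorder_neqE_nat order_less_irrefl zmono)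
  have sub: "zf ` {..k} \<subseteq> rootsD D (Suc k)" using zf by (auto simp: rootsD_def)
  have cz: "card (zf ` {..k}) = Suc k" using card_image[OF zinj] by simp
  have Zeq: "rootsD D (Suc k) = zf ` {..k}"
    using card_subset_eq[OF finZ sub] cz cardZle card_mono[OF finZ sub] by simp
  have cardZ: "card (rootsD D (Suc k)) = Suc k" using Zeq cz by simp
  have prodZ: "D (Suc k) x = (\<Prod>z\<in>rootsD D (Suc k). x - z)" for x
    unfolding DP by (rule monic_roots_prod[OF lcP finZ]) (use cardZ dP ZP in auto)
  have interl: "sgn (D k z) = (-1) ^ card {v\<in>rootsD D (Suc k). z < v}" if z: "z \<in> rootsD D (Suc k)" for z
  proof -
    obtain i where i: "i \<le> k" and zi: "z = zf i" using z Zeq by auto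
    have yt: "y j = t (Suc j)" if "j < k" for j using that by (simp add: t_def)
    have ay: "zf i < y j \<longleftrightarrow> i \<le> j" if j: "j < k" for j
    proof
      assume "zf i < y j"
      show "i \<le> j"
      proof (rule ccontr)
        assume "\<not> i \<le> j"
        then have "t (Suc j) \<le> t i" using tmono'[of "Suc j" i] i by simp
        then show False using \<open>zf i < y j\<close> yt[OF j] zf[OF i] by simp
      qed
    next
      assume "i \<le> j"
      then show "zf i < y j" using yt[OF j] zf[OF i] tmono'[of "Suc i" "Suc j"] j by simp
    qed
    have above_y: "{j\<in>{..<k}. zf i < y j} = {i..<k}" using ay by auto
    have notY: "z \<notin> rootsD D k"
    proof
      assume "z \<in> rootsD D k"
      then obtain j where j: "j < k" "z = y j" using Yeq by auto
      show False
      proof (cases "i \<le> j")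
        case True
        then show False using ay[of j] j zi by simp
      next
        case False
        then have "t (Suc j) \<le> t i" using tmono'[of "Suc j" i] i by simp
        then show False using j yt[of j] zf[OF i] zi by simp
      qed
    qed
    have "sgn (D k z) = (-1) ^ card {v\<in>rootsD D k. z < v}"
      unfolding prodY by (rule sgn_prod_roots[OF finY notY])
    also have "card {v\<in>rootsD D k. z < v} = k - i"
      unfolding Yeq zi card_filter_image[OF yinj] above_y by simp
    also have "k - i = card {v\<in>rootsD D (Suc k). z < v}"
    proof -
      have "card {v\<in>rootsD D (Suc k). z < v} = card {j\<in>{..k}. zf i < zf j}"
        unfolding Zeq zi by (rule card_filter_image[OF zinj])
      also have "{j\<in>{..k}. zf i < zf j} = {i<..k}"
      proof (rule equalityI; rule subsetI)
        fix j assume "j \<in> {j\<in>{..k}. zf i < zf j}"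
        then have j: "j \<le> k" "zf i < zf j" by auto
        then have "i < j" using mono_less_iff[of "Suc k" zf i j, OF zmono2] i by simp
        then show "j \<in> {i<..k}" using j by simp
      next
        fix j assume "j \<in> {i<..k}"
        then have "i < j" "j \<le> k" by auto
        then show "j \<in> {j\<in>{..k}. zf i < zf j}" using zmono[of i j] by simp
      qed
      finally show ?thesis by simp
    qed
    finally show ?thesis .
  qed
  show ?thesis unfolding SInv_def using finZ cardZ prodZ interl by simp
qed

lemma SInv_all: "1 \<le> k \<Longrightarrow> k \<le> N \<Longrightarrow> SInv D k"
proof (induction k)
  case 0 then show ?case by simp
next
  case (Suc k)
  show ?case
  proof (cases "k = 0")
    case True then show ?thesis using SInv1 by simp
  next
    case False
    then show ?thesis using Suc SInv_step[of k] by simp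
  qed
qed

end


lemma Dm0: "det (Dm h 0 x) = 1" by simp

lemma Dm1: "det (Dm h (Suc 0) x) = x - h 0 0"
proof -
  let ?A = "Dm h (Suc 0) x"
  have "det ?A = (\<Sum>i<Suc 0. ?A $$ (i, 0) * cofactor ?A i 0)"
    by (rule laplace_expansion_column[OF Dm_carrier]) simp
  also have "\<dots> = ?A $$ (0, 0) * cofactor ?A 0 0" by simp
  also have "cofactor ?A 0 0 = 1"
  proof -
    have "mat_delete ?A 0 0 \<in> carrier_mat 0 0"
      using mat_delete_carrier[OF Dm_carrier[of h "Suc 0" x]] by simp
    then show ?thesis unfolding cofactor_def by simp
  qed
  finally show ?thesis by (simp add: Dm_def)
qed

lemma Dm_poly: "det (Dm h n x) = poly (char_poly (mat n n (\<lambda>(i,j). h i j))) x"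
proof -
  have A: "mat n n (\<lambda>(i,j). h i j) \<in> carrier_mat n n" by simp
  have "- char_matrix (mat n n (\<lambda>(i,j). h i j)) x = Dm h n x"
    by (rule eq_matI) (auto simp: char_matrix_def Dm_def)
  then show ?thesis using char_poly_matrix[OF A, of x] by simp
qed

lemma Dm_monic: "\<exists>P. lead_coeff P = 1 \<and> degree P = n \<and> (\<forall>x. det (Dm h n x) = poly P x)"
proof -
  have A: "mat n n (\<lambda>(i,j). h i j) \<in> carrier_mat n n" by simp
  show ?thesis using degree_monic_char_poly[OF A] Dm_poly by metis
qed

definition hh :: "nat \<Rightarrow> (nat \<Rightarrow> real) \<Rightarrow> (nat \<Rightarrow> real) \<Rightarrow> (nat \<Rightarrow> real) \<Rightarrow> nat \<Rightarrow> nat \<Rightarrow> real" where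
  "hh M a ta b i j = (if i = j then b i else if i = j + 1 \<and> 1 \<le> i \<and> i \<le> M then a i
      else if j = i + 1 \<and> i + 1 \<le> M then ta (M - i) else 0)"

definition DD where "DD M a ta b n x = det (Dm (hh M a ta b) n x)"

lemma DD0: "DD M a ta b 0 x = 1" by (simp add: DD_def)
lemma DD1: "DD M a ta b (Suc 0) x = x - b 0" by (simp add: DD_def Dm1 hh_def)
lemma DDrec: "Suc n \<le> M \<Longrightarrow> DD M a ta b (Suc (Suc n)) x =
   (x - b (Suc n)) * DD M a ta b (Suc n) x - a (Suc n) * ta (M - n) * DD M a ta b n x"
  unfolding DD_def by (subst det_Dm_rec) (auto simp: hh_def)


definition gg where "gg M a ta b E k = DD M a ta b k E * (\<Prod>j<k. inverse (ta (M - j)))"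

lemma alg1:
  fixes t1 t2 d0 d1 d2 P G0 G1 G2 E bb aa :: real
  assumes "t1 \<noteq> 0" "t2 \<noteq> 0" "d2 = (E - bb) * d1 - aa * t1 * d0"
    "G2 = d2 * (P * inverse t1 * inverse t2)" "G1 = d1 * (P * inverse t1)" "G0 = d0 * P"
  shows "t2 * G2 = (E - bb) * G1 - aa * G0"
  unfolding assms(4,5,6) assms(3) using assms(1,2) by (simp add: field_simps)

lemma alg2:
  fixes t1 d0 d1 d2 P Q G0 G1 E bb aa :: real
  assumes "t1 \<noteq> 0" "d2 = (E - bb) * d1 - aa * t1 * d0"
    "G1 = d1 * (P * inverse t1)" "G0 = d0 * P" "Q = P * inverse t1"
  shows "(E - bb) * G1 - aa * G0 = d2 * Q"
  unfolding assms(3,4,5) assms(2) using assms(1) by (simp add: field_simps)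

lemma gg0: "gg M a ta b E 0 = 1" by (simp add: gg_def DD0)

lemma ggR0:
  assumes "ta M \<noteq> 0"
  shows "ta M * gg M a ta b E (Suc 0) = (E - b 0) * gg M a ta b E 0"
  using assms by (simp add: gg_def DD0 DD1)

lemma ggRm:
  assumes nz: "\<And>k. 1 \<le> k \<Longrightarrow> k \<le> M \<Longrightarrow> ta k \<noteq> 0" and nM: "Suc n < M"
  shows "ta (M - Suc n) * gg M a ta b E (Suc (Suc n)) =
     (E - b (Suc n)) * gg M a ta b E (Suc n) - a (Suc n) * gg M a ta b E n"
proof -
  let ?P = "\<Prod>j<n. inverse (ta (M - j))"
  have t1: "ta (M - n) \<noteq> 0" using nz[of "M - n"] nM by simp
  have t2: "ta (M - Suc n) \<noteq> 0" using nz[of "M - Suc n"] nM by simp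
  have "DD M a ta b (Suc (Suc n)) E = (E - b (Suc n)) * DD M a ta b (Suc n) E - a (Suc n) * ta (M - n) * DD M a ta b n E"
    using DDrec[of n M] nM by simp
  moreover have "gg M a ta b E (Suc (Suc n)) = DD M a ta b (Suc (Suc n)) E * (?P * inverse (ta (M - n)) * inverse (ta (M - Suc n)))"
    by (simp add: gg_def)
  moreover have "gg M a ta b E (Suc n) = DD M a ta b (Suc n) E * (?P * inverse (ta (M - n)))"
    by (simp add: gg_def)
  moreover have "gg M a ta b E n = DD M a ta b n E * ?P"
    by (simp add: gg_def)
  ultimately show ?thesis using t1 t2 by (intro alg1) blast+
qed

lemma ggRM:
  assumes nz: "\<And>k. 1 \<le> k \<Longrightarrow> k \<le> M \<Longrightarrow> ta k \<noteq> 0" and M1: "1 \<le> M"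
  shows "(E - b M) * gg M a ta b E M - a M * gg M a ta b E (M - 1) =
     DD M a ta b (Suc M) E * (\<Prod>j<M. inverse (ta (M - j)))"
proof -
  obtain n where n: "M = Suc n" using M1 by (cases M) auto
  have t1: "ta (M - n) \<noteq> 0" using nz[of "M - n"] n by simp
  have "DD M a ta b (Suc (Suc n)) E = (E - b (Suc n)) * DD M a ta b (Suc n) E - a (Suc n) * ta (M - n) * DD M a ta b n E"
    using DDrec[of n M] n by simp
  moreover have "gg M a ta b E M = DD M a ta b (Suc n) E * ((\<Prod>j<n. inverse (ta (M - j))) * inverse (ta (M - n)))"
    by (simp add: gg_def n)
  moreover have "gg M a ta b E (M - 1) = DD M a ta b n E * (\<Prod>j<n. inverse (ta (M - j)))"
    by (simp add: gg_def n)
  moreover have "(\<Prod>j<M. inverse (ta (M - j))) = (\<Prod>j<n. inverse (ta (M - j))) * inverse (ta (M - n))"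
    by (simp add: n)
  ultimately show ?thesis using t1 unfolding n by (intro alg2) auto
qed


context
  fixes M :: nat and a ta b bt :: "nat \<Rightarrow> real"
  assumes M1: "1 \<le> M"
    and apos: "\<And>k. 1 \<le> k \<Longrightarrow> k \<le> M \<Longrightarrow> a k > 0"
    and tapos: "\<And>k. 1 \<le> k \<Longrightarrow> k \<le> M \<Longrightarrow> ta k > 0"
    and bsym: "\<And>i. i \<le> M \<Longrightarrow> bt i = b (M - i)"
begin

lemma back_uniq:
  fixes y :: "nat \<Rightarrow> real"
  assumes yM: "y M = 0" and yRM: "a M * y (M - 1) = (E - b M) * y M"
    and yRm: "\<And>k. 1 \<le> k \<Longrightarrow> k < M \<Longrightarrow> a k * y (k - 1) = (E - b k) * y k - ta (M - k) * y (k + 1)"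
  shows "k \<le> M \<Longrightarrow> y k = 0"
proof -
  have "\<forall>d. d \<le> M \<longrightarrow> y (M - d) = 0"
  proof (intro allI)
    fix d show "d \<le> M \<longrightarrow> y (M - d) = 0"
    proof (induction d rule: less_induct)
      case (less d)
      show ?case
      proof (intro impI)
        assume dM: "d \<le> M"
        consider "d = 0" | "d = 1" | "2 \<le> d" by linarith
        then show "y (M - d) = 0"
        proof cases
          case 1 then show ?thesis using yM by simp
        next
          case 2
          have "a M > 0" using apos[of M] M1 by simp
          then show ?thesis using yRM yM 2 by simp
        next
          case 3
          define k where "k = M - d + 1"
          have k1: "1 \<le> k" "k < M" using 3 dM by (auto simp: k_def)
          have e1: "k - 1 = M - d" using dM by (simp add: k_def)
          have e2: "k = M - (d - 1)" using dM 3 by (simp add: k_def)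
          have e3: "k + 1 = M - (d - 2)" using dM 3 by (simp add: k_def)
          have "y k = 0" using less.IH[of "d - 1"] e2 3 dM by simp
          moreover have "y (k + 1) = 0" using less.IH[of "d - 2"] e3 3 dM by simp
          ultimately have "a k * y (k - 1) = 0" using yRm[OF k1] by simp
          moreover have "a k > 0" using apos k1 by simp
          ultimately show ?thesis using e1 by simp
        qed
      qed
    qed
  qed
  then show "k \<le> M \<Longrightarrow> y k = 0" by (metis diff_diff_cancel diff_le_self)
qed

lemma main_abs:
  assumes root: "DD M a ta b (Suc M) E = 0"
  shows "DD M ta a bt (Suc M) E = 0"
    and "\<And>k. k \<le> M \<Longrightarrow> gg M ta a bt E k = gg M ta a bt E M * gg M a ta b E (M - k)"
    and "gg M ta a bt E M * gg M a ta b E M = 1"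
proof -
  let ?g = "gg M a ta b E" and ?t = "gg M ta a bt E"
  have nzt: "\<And>k. 1 \<le> k \<Longrightarrow> k \<le> M \<Longrightarrow> ta k \<noteq> 0" using tapos by (metis less_irrefl)
  have nza: "\<And>k. 1 \<le> k \<Longrightarrow> k \<le> M \<Longrightarrow> a k \<noteq> 0" using apos by (metis less_irrefl)
  have gRm: "a k * ?g (k - 1) = (E - b k) * ?g k - ta (M - k) * ?g (k + 1)" if kk: "1 \<le> k" "k < M" for k
  proof -
    obtain n where n: "k = Suc n" using kk by (cases k) auto
    show ?thesis using ggRm[where M=M and ta=ta and n=n and a=a and b=b and E=E, OF nzt] kk n by simp
  qed
  have gRM: "a M * ?g (M - 1) = (E - b M) * ?g M"
    using ggRM[where M=M and ta=ta and b=b and E=E and a=a, OF nzt M1] root by simp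
  have tR0: "a M * ?t (Suc 0) = (E - bt 0) * ?t 0"
    using ggR0[where ta=a and M=M and E=E and b=bt and a=ta] nza[of M] M1 by simp
  have tRm: "a k * ?t (M - k + 1) = (E - b k) * ?t (M - k) - ta (M - k) * ?t (M - k - 1)"
    if kk: "1 \<le> k" "k < M" for k
  proof -
    obtain n where n: "M - k = Suc n" using kk by (cases "M - k") auto
    have "a (M - Suc n) * ?t (Suc (Suc n)) = (E - bt (Suc n)) * ?t (Suc n) - ta (Suc n) * ?t n"
      using ggRm[where M=M and ta=a and n=n and a=ta and b=bt and E=E, OF nza] kk n by simp
    moreover have "M - Suc n = k" using n kk by simp
    moreover have "bt (Suc n) = b k"
    proof -
      have "M - Suc n = k" using n kk by simp
      then show ?thesis using bsym[of "Suc n"] n kk by simp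
    qed
    ultimately show ?thesis using n by simp
  qed
  define y where "y k = ?t (M - k) * ?g M - ?g k * ?t (M - M)" for k
  have yM: "y M = 0" by (simp add: y_def)
  have yRM: "a M * y (M - 1) = (E - b M) * y M"
  proof -
    have "M - (M - 1) = Suc 0" using M1 by simp
    then have "a M * y (M - 1) = a M * ?t (Suc 0) * ?g M - a M * ?g (M - 1) * ?t 0"
      by (simp add: y_def algebra_simps)
    also have "\<dots> = (E - b M) * ?t 0 * ?g M - (E - b M) * ?g M * ?t 0"
    proof -
      have A: "a M * ?t (Suc 0) = (E - b M) * ?t 0" using tR0 bsym[of 0] by simp
      show ?thesis by (simp only: A gRM)
    qed
    also have "\<dots> = 0" by simp
    finally show ?thesis using yM by simp
  qed
  have yRm: "a k * y (k - 1) = (E - b k) * y k - ta (M - k) * y (k + 1)" if k: "1 \<le> k" "k < M" for k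
  proof -
    have e1: "M - (k - Suc 0) = Suc (M - k)" using k by simp
    have e2: "M - (k + 1) = M - k - 1" using k by simp
    have "a k * y (k - 1) = (a k * ?t (M - k + 1)) * ?g M - (a k * ?g (k - 1)) * ?t 0"
      by (simp add: y_def e1 algebra_simps)
    also have "\<dots> = ((E - b k) * ?t (M - k) - ta (M - k) * ?t (M - k - 1)) * ?g M
        - ((E - b k) * ?g k - ta (M - k) * ?g (k + 1)) * ?t 0"
      using tRm[OF k] gRm[OF k] by simp
    also have "\<dots> = (E - b k) * y k - ta (M - k) * y (k + 1)"
      by (simp add: y_def e2 algebra_simps)
    finally show ?thesis .
  qed
  have y0: "\<And>k. k \<le> M \<Longrightarrow> y k = 0" using back_uniq[OF yM yRM yRm] by blast
  have key: "?t (M - k) * ?g M = ?g k" if "k \<le> M" for k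
    using y0[OF that] by (simp add: y_def gg0)
  show one: "?t M * ?g M = 1" using key[of 0] by (simp add: gg0)
  show "?t k = ?t M * ?g (M - k)" if "k \<le> M" for k
  proof -
    have "?t k = ?t k * (?t M * ?g M)" using one by simp
    also have "\<dots> = ?t M * (?t (M - (M - k)) * ?g M)" using that by simp
    also have "\<dots> = ?t M * ?g (M - k)" using key[of "M - k"] by simp
    finally show ?thesis .
  qed
  show "DD M ta a bt (Suc M) E = 0"
  proof -
    have r: "(E - bt M) * ?t M - ta M * ?t (M - 1) = DD M ta a bt (Suc M) E * (\<Prod>j<M. inverse (a (M - j)))"
      using ggRM[where M=M and ta=a and b=bt and E=E and a=ta, OF nza M1] by simp
    have tM1: "?t (M - 1) = ?t M * ?g (Suc 0)"
      using \<open>\<And>k. k \<le> M \<Longrightarrow> ?t k = ?t M * ?g (M - k)\<close>[of "M - 1"] M1 by simp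
    have g1: "ta M * ?g (Suc 0) = E - b 0"
      using ggR0[where ta=ta and M=M and E=E and b=b and a=a] nzt[of M] M1 by (simp add: gg0)
    have "(E - bt M) * ?t M - ta M * ?t (M - 1) = ?t M * ((E - b 0) - ta M * ?g (Suc 0))"
      using tM1 bsym[of M] by (simp add: algebra_simps)
    also have "\<dots> = 0" using g1 by simp
    finally have "(E - bt M) * ?t M - ta M * ?t (M - 1) = 0" .
    then have "DD M ta a bt (Suc M) E * (\<Prod>j<M. inverse (a (M - j))) = 0" using r by simp
    moreover have "(\<Prod>j<M. inverse (a (M - j))) \<noteq> 0"
      using nza by (simp add: prod_zero_iff)
    ultimately show ?thesis by simp
  qed
qed

end


lemma rev_sorted_count:
  fixes Z :: "real set"
  assumes fin: "finite Z" and card: "card Z = n" and j: "j < n"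
  shows "rev (sorted_list_of_set Z) ! j \<in> Z \<and> card {y\<in>Z. rev (sorted_list_of_set Z) ! j < y} = j"
proof -
  define xs where "xs = sorted_list_of_set Z"
  have len: "length xs = n" using fin card by (simp add: xs_def)
  have st: "sorted_wrt (<) xs" by (simp add: xs_def)
  have set: "set xs = Z" using fin by (simp add: xs_def)
  have dist: "distinct xs" by (simp add: xs_def)
  define i where "i = n - 1 - j"
  have i: "i < n" using j by (simp add: i_def)
  have r: "rev xs ! j = xs ! i" using j len by (simp add: rev_nth i_def)
  have mono: "\<And>p q. p < q \<Longrightarrow> q < n \<Longrightarrow> xs ! p < xs ! q" using sorted_wrt_nth_less[OF st] len by auto
  have Zi: "Z = (!) xs ` {..<n}" using set len by (auto simp: set_conv_nth)
  have inj: "inj_on ((!) xs) {..<n}" using dist len by (auto simp: inj_on_def nth_eq_iff_index_eq)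
  have "card {y\<in>Z. xs ! i < y} = card {m\<in>{..<n}. xs ! i < xs ! m}"
    unfolding Zi by (rule card_filter_image[OF inj])
  also have "{m\<in>{..<n}. xs ! i < xs ! m} = {i<..<n}"
  proof (rule equalityI; rule subsetI)
    fix m assume "m \<in> {m\<in>{..<n}. xs ! i < xs ! m}"
    then have m: "m < n" "xs ! i < xs ! m" by auto
    then have "i < m" using mono_less_iff[of n "(!) xs" i m, OF mono] i by blast
    then show "m \<in> {i<..<n}" using m by simp
  next
    fix m assume "m \<in> {i<..<n}"
    then have "i < m" "m < n" by auto
    then show "m \<in> {m\<in>{..<n}. xs ! i < xs ! m}" using mono[of i m] by simp
  qed
  finally have "card {y\<in>Z. xs ! i < y} = j" using j by (simp add: i_def)
  moreover have "xs ! i \<in> Z" using i len set nth_mem by blast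
  ultimately show ?thesis using r by (simp add: xs_def)
qed

lemma abs_final:
  fixes M :: nat and a ta b bt :: "nat \<Rightarrow> real"
  assumes M1: "1 \<le> M"
    and apos: "\<And>k. 1 \<le> k \<Longrightarrow> k \<le> M \<Longrightarrow> a k > 0"
    and tapos: "\<And>k. 1 \<le> k \<Longrightarrow> k \<le> M \<Longrightarrow> ta k > 0"
    and bsym: "\<And>i. i \<le> M \<Longrightarrow> bt i = b (M - i)"
  defines "Z \<equiv> {x. DD M a ta b (Suc M) x = 0}"
  shows "{x. DD M ta a bt (Suc M) x = 0} = Z" "finite Z" "card Z = Suc M"
    and "\<And>E k. E \<in> Z \<Longrightarrow> k \<le> M \<Longrightarrow> gg M ta a bt E k = gg M ta a bt E M * gg M a ta b E (M - k)"
    and "\<And>E. E \<in> Z \<Longrightarrow> gg M ta a bt E M * gg M a ta b E M = 1"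
    and "\<And>E. E \<in> Z \<Longrightarrow> sgn (gg M a ta b E M) = (-1) ^ card {y\<in>Z. E < y}"
proof -
  have bsym': "\<And>i. i \<le> M \<Longrightarrow> b i = bt (M - i)" using bsym by (metis diff_diff_cancel diff_le_self)
  show "{x. DD M ta a bt (Suc M) x = 0} = Z"
    unfolding Z_def
    using main_abs(1)[where M=M and a=a and ta=ta and b=b and bt=bt, OF M1 apos tapos bsym] main_abs(1)[where M=M and a=ta and ta=a and b=bt and bt=b, OF M1 tapos apos bsym'] by blast
  show "\<And>E k. E \<in> Z \<Longrightarrow> k \<le> M \<Longrightarrow> gg M ta a bt E k = gg M ta a bt E M * gg M a ta b E (M - k)"
    unfolding Z_def using main_abs(2)[where M=M and a=a and ta=ta and b=b and bt=bt, OF M1 apos tapos bsym] by blast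
  show "\<And>E. E \<in> Z \<Longrightarrow> gg M ta a bt E M * gg M a ta b E M = 1"
    unfolding Z_def using main_abs(3)[where M=M and a=a and ta=ta and b=b and bt=bt, OF M1 apos tapos bsym] by blast
  let ?D = "DD M a ta b"
  let ?c = "\<lambda>k. a (Suc k) * ta (M - k)"
  have D0: "\<And>x. ?D 0 x = 1" by (rule DD0)
  have D1: "\<And>x. ?D 1 x = x - b 0" using DD1 by simp
  have Drec: "\<And>k x. Suc (Suc k) \<le> Suc M \<Longrightarrow> ?D (Suc (Suc k)) x = (x - b (Suc k)) * ?D (Suc k) x - ?c k * ?D k x"
    using DDrec by (simp add: mult.assoc)
  have cpos: "\<And>k. Suc (Suc k) \<le> Suc M \<Longrightarrow> ?c k > 0"
    using apos tapos by simp
  have Dpoly: "\<And>k. k \<le> Suc M \<Longrightarrow> \<exists>P. lead_coeff P = 1 \<and> degree P = k \<and> (\<forall>x. ?D k x = poly P x)"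
    unfolding DD_def by (rule Dm_monic)
  have I: "SInv ?D (Suc M)" by (rule SInv_all[OF D0 D1 Drec cpos Dpoly]) auto
  have ZZ: "rootsD ?D (Suc M) = Z" by (simp add: rootsD_def Z_def)
  show fin: "finite Z" and "card Z = Suc M" using I unfolding SInv_def ZZ by auto
  show "sgn (gg M a ta b E M) = (-1) ^ card {y\<in>Z. E < y}" if E: "E \<in> Z" for E
  proof -
    have s: "sgn (?D M E) = (-1) ^ card {y\<in>Z. E < y}" using I E unfolding SInv_def ZZ by simp
    have p: "(\<Prod>j<M. inverse (ta (M - j))) > 0"
      by (rule prod_pos) (use tapos in auto)
    show ?thesis unfolding gg_def using s p by (simp add: sgn_mult)
  qed
qed


lemma fac_pos:
  fixes x y c :: real
  assumes "0 \<le> x" "x < 1" "0 \<le> y" "y < 1" "\<bar>c\<bar> \<le> 2"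
  shows "(1 - x) * (1 + c * y + y^2) > 0"
proof -
  have "-2 \<le> c" using assms by (simp add: abs_le_iff)
  then have "c * y \<ge> -2 * y" using mult_right_mono[of "-2" c y] assms by simp
  then have "1 + c * y + y^2 \<ge> (1 - y)^2" by (simp add: power2_eq_square algebra_simps)
  moreover have "(1 - y)^2 > 0" using assms by simp
  ultimately have "1 + c * y + y^2 > 0" by linarith
  moreover have "1 - x > 0" using assms by simp
  ultimately show ?thesis by (rule mult_pos_pos[rotated])
qed

lemma fac_bound:
  fixes x y c q :: real
  assumes "0 \<le> x" "x \<le> q" "0 \<le> y" "y \<le> q" "q \<le> 1" "\<bar>c\<bar> \<le> 2"
  shows "\<bar>(1 - x) * (1 + c * y + y^2) - 1\<bar> \<le> 7 * q"
proof -
  have e: "(1 - x) * (1 + c * y + y^2) - 1 = - x + c * y + y^2 - x * (c * y) - x * y^2"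
    by (simp add: algebra_simps power2_eq_square)
  have b1: "\<bar>c * y\<bar> \<le> 2 * q" using assms by (simp add: abs_mult mult_mono)
  have b2: "y^2 \<le> q"
  proof -
    have "y * y \<le> q * 1" using assms by (intro mult_mono) auto
    then show ?thesis by (simp add: power2_eq_square)
  qed
  have b3: "\<bar>x * (c * y)\<bar> \<le> 2 * q"
  proof -
    have "\<bar>x * (c * y)\<bar> = x * \<bar>c * y\<bar>" using assms by (simp add: abs_mult)
    also have "\<dots> \<le> 1 * (2 * q)" using b1 assms by (intro mult_mono) auto
    finally show ?thesis by simp
  qed
  have b4: "x * y^2 \<le> q"
  proof -
    have "x * y^2 \<le> 1 * q" using b2 assms by (intro mult_mono) auto
    then show ?thesis by simp
  qed
  have b5: "0 \<le> x * y^2" using assms by simp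
  have b1': "- (2 * q) \<le> c * y" "c * y \<le> 2 * q" using b1 by (simp_all add: abs_le_iff)
  have b3': "- (2 * q) \<le> x * (c * y)" "x * (c * y) \<le> 2 * q" using b3 by (simp_all add: abs_le_iff)
  have y0: "0 \<le> y^2" by simp
  have l: "- x + c * y + y^2 - x * (c * y) - x * y^2 \<le> 7 * q" using b1' b2 b3' b4 b5 assms by linarith
  have r: "- (- x + c * y + y^2 - x * (c * y) - x * y^2) \<le> 7 * q" using b1' b2 b3' b4 b5 y0 assms by linarith
  show ?thesis unfolding e abs_le_iff using l r by blast
qed

lemma fac_prod:
  fixes p c :: real and x y :: "nat \<Rightarrow> real"
  assumes p: "0 < p" "p < 1" and x: "\<And>n. 0 \<le> x n \<and> x n \<le> p ^ Suc n"
    and y: "\<And>n. 0 \<le> y n \<and> y n \<le> p ^ Suc n" and c: "\<bar>c\<bar> \<le> 2"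
  shows "convergent_prod (\<lambda>n. (1 - x n) * (1 + c * y n + (y n)^2))"
    and "(\<Prod>n. (1 - x n) * (1 + c * y n + (y n)^2)) > 0"
proof -
  have pS: "p ^ Suc n < 1" for n
  proof -
    have "p ^ n \<le> 1" using p by (simp add: power_le_one)
    then have "p * p ^ n \<le> p * 1" using p by (intro mult_left_mono) auto
    then show ?thesis using p by (simp only: power_Suc mult_1_right)
  qed
  have pn: "p ^ Suc n \<le> p ^ n" for n using p by (simp add: power_decreasing)
  have pos: "(1 - x n) * (1 + c * y n + (y n)^2) > 0" for n
    using fac_pos[of "x n" "y n" c] x[of n] y[of n] c pS[of n] by linarith
  have bd: "\<bar>(1 - x n) * (1 + c * y n + (y n)^2) - 1\<bar> \<le> 7 * p ^ n" for n
  proof -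
    have "\<bar>(1 - x n) * (1 + c * y n + (y n)^2) - 1\<bar> \<le> 7 * p ^ Suc n"
      using fac_bound[of "x n" "p ^ Suc n" "y n" c] x[of n] y[of n] c pS[of n] by linarith
    then show ?thesis using pn[of n] by linarith
  qed
  have sum: "summable (\<lambda>n. \<bar>(1 - x n) * (1 + c * y n + (y n)^2) - 1\<bar>)"
  proof (rule summable_comparison_test[where g = "\<lambda>n. 7 * p ^ n"])
    show "\<exists>N. \<forall>n\<ge>N. norm \<bar>(1 - x n) * (1 + c * y n + (y n)^2) - 1\<bar> \<le> 7 * p ^ n" using bd by auto
    show "summable (\<lambda>n. 7 * p ^ n)" using p by (intro summable_mult summable_geometric) auto
  qed
  have "convergent_prod (\<lambda>n. 1 + ((1 - x n) * (1 + c * y n + (y n)^2) - 1))"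
    by (rule summable_imp_convergent_prod_real[OF sum]) (use pos in \<open>smt (verit)\<close>)
  then show cp: "convergent_prod (\<lambda>n. (1 - x n) * (1 + c * y n + (y n)^2))" by simp
  show "(\<Prod>n. (1 - x n) * (1 + c * y n + (y n)^2)) > 0"
    by (rule less_0_prodinf[OF cp pos])
qed

lemma fac_cont:
  fixes p :: real and x y :: "nat \<Rightarrow> real" and cf :: "real \<Rightarrow> real"
  assumes p: "0 < p" "p < 1" and x: "\<And>n. 0 \<le> x n \<and> x n \<le> p ^ Suc n"
    and y: "\<And>n. 0 \<le> y n \<and> y n \<le> p ^ Suc n" and c: "\<And>z. \<bar>cf z\<bar> \<le> 2"
    and cc: "continuous_on UNIV cf"
  shows "isCont (\<lambda>z. \<Prod>n. (1 - x n) * (1 + cf z * y n + (y n)^2)) z0"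
proof -
  define F where "F n z = (1 - x n) * (1 + cf z * y n + (y n)^2)" for n z
  let ?A = "cball z0 (1::real)"
  have pS: "p ^ Suc n < 1" for n
  proof -
    have "p ^ n \<le> 1" using p by (simp add: power_le_one)
    then have "p * p ^ n \<le> p * 1" using p by (intro mult_left_mono) auto
    then show ?thesis using p by (simp only: power_Suc mult_1_right)
  qed
  have pn: "p ^ Suc n \<le> p ^ n" for n using p by (simp add: power_decreasing)
  have contF: "continuous_on ?A (F n)" for n
    unfolding F_def by (intro continuous_intros continuous_on_subset[OF cc]) auto
  have bd: "norm (norm (F n z - 1)) \<le> 7 * p ^ n" for n z
  proof -
    have "\<bar>F n z - 1\<bar> \<le> 7 * p ^ Suc n"
      unfolding F_def using fac_bound[of "x n" "p ^ Suc n" "y n" "cf z"] x[of n] y[of n] c[of z] pS[of n] by linarith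
    then show ?thesis using pn[of n] by simp
  qed
  have uc: "uniformly_convergent_on ?A (\<lambda>N z. \<Prod>n<N. F n z)"
  proof (rule uniformly_convergent_on_prod'[OF contF])
    show "compact ?A" by simp
    show "uniformly_convergent_on ?A (\<lambda>N z. \<Sum>n<N. norm (F n z - 1))"
      by (rule Weierstrass_m_test'[where M = "\<lambda>n. 7 * p ^ n"]) (use bd p in \<open>auto intro!: summable_mult summable_geometric\<close>)
  qed
  then have ul: "uniform_limit ?A (\<lambda>N z. \<Prod>n<N. F n z) (\<lambda>z. lim (\<lambda>N. \<Prod>n<N. F n z)) sequentially"
    using uniformly_convergent_uniform_limit_iff by blast
  have "continuous_on ?A (\<lambda>z. lim (\<lambda>N. \<Prod>n<N. F n z))"
    by (rule uniform_limit_theorem[OF _ ul]) (auto intro!: always_eventually continuous_on_prod contF)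
  moreover have "lim (\<lambda>N. \<Prod>n<N. F n z) = (\<Prod>n. F n z)" for z
  proof -
    have "convergent_prod (F n') " if "False" for n' using that by simp
    have cp: "convergent_prod (\<lambda>n. F n z)"
      unfolding F_def by (rule fac_prod(1)[OF p x y c])
    have "(\<lambda>N. \<Prod>n\<le>N. F n z) \<longlonglongrightarrow> (\<Prod>n. F n z)" by (rule convergent_prod_LIMSEQ[OF cp])
    then have "(\<lambda>N. \<Prod>n<N. F n z) \<longlonglongrightarrow> (\<Prod>n. F n z)" by (simp add: LIMSEQ_lessThan_iff_atMost)
    then show ?thesis by (rule limI)
  qed
  ultimately have "continuous_on ?A (\<lambda>z. \<Prod>n. F n z)" by simp
  then have "continuous (at z0) (\<lambda>z. \<Prod>n. F n z)"
    by (rule continuous_on_interior) simp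
  then show ?thesis unfolding F_def by (simp add: isCont_def continuous_at)
qed


definition Q1 :: "real \<Rightarrow> real \<Rightarrow> real" where
  "Q1 p z = (\<Prod>n. (1 - p^(2*Suc n)) * (1 + (-2*cos(2*z)) * p^(2*Suc n) + (p^(2*Suc n))^2))"
definition Q2 :: "real \<Rightarrow> real \<Rightarrow> real" where
  "Q2 p z = (\<Prod>n. (1 - p^(2*Suc n)) * (1 + (2*cos(2*z)) * p^(2*Suc n) + (p^(2*Suc n))^2))"

lemma p4: "(p::real)^(4*Suc n) = (p^(2*Suc n))^2"
proof -
  have "4*Suc n = (2*Suc n)*2" by simp
  then show ?thesis by (simp only: power_mult)
qed
lemma p42: "(p::real)^(4*n+2) = (p^(2*n+1))^2"
proof -
  have "4*n+2 = (2*n+1)*2" by simp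
  then show ?thesis by (simp only: power_mult)
qed

lemma theta1_Q: "theta1 p z = 2 * p powr (1/4) * sin z * Q1 p z"
  unfolding theta1_def Q1_def p4 by (simp add: algebra_simps)
lemma theta2_Q: "theta2 p z = 2 * p powr (1/4) * cos z * Q2 p z"
  unfolding theta2_def Q2_def p4 by (simp add: algebra_simps)
lemma theta3_alt: "theta3 p z = (\<Prod>n. (1 - p^(2*Suc n)) * (1 + (2*cos(2*z)) * p^(2*n+1) + (p^(2*n+1))^2))"
  unfolding theta3_def p42 by (simp add: algebra_simps)
lemma theta4_alt: "theta4 p z = (\<Prod>n. (1 - p^(2*Suc n)) * (1 + (-2*cos(2*z)) * p^(2*n+1) + (p^(2*n+1))^2))"
  unfolding theta4_def p42 by (simp add: algebra_simps)

context
  fixes p :: real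
  assumes p: "0 < p" "p < 1"
begin

lemma xb: "0 \<le> p^(2*Suc n) \<and> p^(2*Suc n) \<le> p ^ Suc n"
proof
  show "0 \<le> p^(2*Suc n)" using p by simp
  show "p^(2*Suc n) \<le> p ^ Suc n" by (rule power_decreasing) (use p in auto)
qed
lemma yb: "0 \<le> p^(2*n+1) \<and> p^(2*n+1) \<le> p ^ Suc n"
proof
  show "0 \<le> p^(2*n+1)" using p by simp
  show "p^(2*n+1) \<le> p ^ Suc n" by (rule power_decreasing) (use p in auto)
qed
lemma cb: "\<bar>2 * cos (2*z)\<bar> \<le> (2::real)" "\<bar>-2 * cos (2*z)\<bar> \<le> (2::real)"
  by (simp_all add: abs_mult)

lemma Q1_pos: "Q1 p z > 0"
  unfolding Q1_def by (rule fac_prod(2)[OF p xb xb cb(2)])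
lemma Q2_pos: "Q2 p z > 0"
  unfolding Q2_def by (rule fac_prod(2)[OF p xb xb cb(1)])
lemma theta3_pos: "theta3 p z > 0"
  unfolding theta3_alt by (rule fac_prod(2)[OF p xb yb cb(1)])
lemma theta4_pos: "theta4 p z > 0"
  unfolding theta4_alt by (rule fac_prod(2)[OF p xb yb cb(2)])

lemma Q1_cont: "isCont (Q1 p) z0"
proof -
  have "isCont (\<lambda>z. \<Prod>n. (1 - p^(2*Suc n)) * (1 + (-2*cos(2*z)) * p^(2*Suc n) + (p^(2*Suc n))^2)) z0"
    by (rule fac_cont[OF p xb xb]) (auto simp: abs_mult intro!: continuous_intros)
  then show ?thesis unfolding Q1_def[abs_def] .
qed

lemma theta1_deriv: "deriv (theta1 p) 0 = 2 * p powr (1/4) * Q1 p 0"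
proof -
  let ?C = "2 * p powr (1/4)"
  have "((\<lambda>y. (sin y - sin 0) / (y - 0)) \<longlongrightarrow> cos 0) (at (0::real))"
    using DERIV_sin[of 0] by (simp only: has_field_derivative_iff)
  then have s: "((\<lambda>y. sin y / y) \<longlongrightarrow> 1) (at (0::real))" by simp
  have q: "(Q1 p \<longlongrightarrow> Q1 p 0) (at 0)" using Q1_cont[of 0] by (simp add: isCont_def)
  have "((\<lambda>y. ?C * (sin y / y) * Q1 p y) \<longlongrightarrow> ?C * 1 * Q1 p 0) (at 0)"
    by (intro tendsto_mult tendsto_const s q)
  then have "((\<lambda>y. (theta1 p y - theta1 p 0) / (y - 0)) \<longlongrightarrow> ?C * Q1 p 0) (at 0)"
    by (simp add: theta1_Q mult.assoc mult.left_commute)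
  then have "(theta1 p has_field_derivative ?C * Q1 p 0) (at 0)"
    by (simp only: has_field_derivative_iff)
  then show ?thesis by (rule DERIV_imp_deriv)
qed

lemma theta1_deriv_pos: "deriv (theta1 p) 0 > 0"
  unfolding theta1_deriv using Q1_pos p by simp

lemma theta1_pos: "0 < z \<Longrightarrow> z < pi \<Longrightarrow> theta1 p z > 0"
  unfolding theta1_Q using Q1_pos p sin_gt_zero by simp

lemma theta2_pos: "- (pi/2) < z \<Longrightarrow> z < pi/2 \<Longrightarrow> theta2 p z > 0"
  unfolding theta2_Q using Q2_pos p cos_gt_zero_pi by simp

end

lemma cos_refl: "cos (2 * (pi/2 - z)) = - cos (2 * z)"
proof -
  have "2 * (pi/2 - z) = pi - 2 * z" by (simp add: algebra_simps)
  then show ?thesis by (simp add: cos_diff)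
qed

lemma Q1_refl: "Q1 p (pi/2 - z) = Q2 p z" unfolding Q1_def Q2_def cos_refl by simp
lemma Q2_refl: "Q2 p (pi/2 - z) = Q1 p z" unfolding Q1_def Q2_def cos_refl by simp
lemma theta1_refl: "theta1 p (pi/2 - z) = theta2 p z"
  unfolding theta1_Q theta2_Q Q1_refl by (simp add: cos_sin_eq)
lemma theta2_refl: "theta2 p (pi/2 - z) = theta1 p z"
  unfolding theta1_Q theta2_Q Q2_refl by (simp add: sin_cos_eq)
lemma theta3_refl: "theta3 p (pi/2 - z) = theta4 p z"
  unfolding theta3_alt theta4_alt cos_refl by simp
lemma theta4_refl: "theta4 p (pi/2 - z) = theta3 p z"
  unfolding theta3_alt theta4_alt cos_refl by simp


lemma piperm_vals:
  "piperm 2 1 = 2" "piperm 2 2 = 1" "piperm 2 3 = 4" "piperm 2 4 = 3"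
  by (simp_all add: piperm_def)

lemma piperm_comp: "r \<in> {1..4} \<Longrightarrow> s \<in> {1..4} \<Longrightarrow> piperm 2 (piperm r s) = piperm (piperm 2 r) s"
proof -
  assume "r \<in> {1..4}" "s \<in> {1..4}"
  then have "r = 1 \<or> r = 2 \<or> r = 3 \<or> r = 4" "s = 1 \<or> s = 2 \<or> s = 3 \<or> s = 4" by auto
  then show ?thesis by (auto simp: piperm_def)
qed

lemma piperm_invol: "piperm 2 (piperm 2 s) = s"
  by (simp add: piperm_def)

lemma twist_twist: "twist (twist u) = u"
  by (simp add: Defs.twist_def fun_eq_iff piperm_invol o_def)

lemma twist_12: "twist u 1 = u 2" "twist u 2 = u 1"
  unfolding Defs.twist_def o_def piperm_def by simp_all

lemma alpha_twist: "alpha (twist u) M = alpha u M"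
  unfolding alpha_def twist_12 by (simp add: add.commute)

lemma atil_twist: "atil p (twist u) (twist v) M k = acoef p u v M k"
  by (simp add: atil_def twist_twist)

definition KK :: "real \<Rightarrow> real \<Rightarrow> nat \<Rightarrow> real" where
  "KK p \<alpha> r = (if r = 1 then theta2 p 0 / (\<alpha>/2 * deriv (theta1 p) 0)
     else if r = 2 then (\<alpha>/2 * deriv (theta1 p) 0) / theta2 p 0
     else if r = 3 then theta4 p 0 / theta3 p 0 else theta3 p 0 / theta4 p 0)"

context
  fixes p \<alpha> :: real
  assumes p: "0 < p" "p < 1" and a: "\<alpha> > 0"
begin

lemma d_pos: "deriv (theta1 p) 0 > 0" by (rule theta1_deriv_pos[OF p])
lemma t2_0: "theta2 p 0 > 0" using theta2_pos[OF p, of 0] by simp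
lemma t3_0: "theta3 p 0 > 0" by (rule theta3_pos[OF p])
lemma t4_0: "theta4 p 0 > 0" by (rule theta4_pos[OF p])

lemma KK_nz: "KK p \<alpha> r \<noteq> 0"
  using d_pos t2_0 t3_0 t4_0 a by (simp add: KK_def)

lemma brk_refl:
  assumes r: "r \<in> {1..4}"
  shows "brk p \<alpha> r (pi/\<alpha> - x) = KK p \<alpha> r * brk p \<alpha> (piperm 2 r) x"
proof -
  have e: "\<alpha>/2 * (pi/\<alpha> - x) = pi/2 - \<alpha>/2 * x" using a by (simp add: field_simps)
  have d: "deriv (theta1 p) 0 \<noteq> 0" using d_pos by simp
  have t2: "theta2 p 0 \<noteq> 0" using t2_0 by simp
  have t3: "theta3 p 0 \<noteq> 0" using t3_0 by simp
  have t4: "theta4 p 0 \<noteq> 0" using t4_0 by simp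
  let ?z = "\<alpha>/2 * x"
  from r have "r = 1 \<or> r = 2 \<or> r = 3 \<or> r = 4" by auto
  then show ?thesis
  proof (elim disjE)
    assume r1: "r = 1"
    have "brk p \<alpha> r (pi/\<alpha> - x) = theta1 p (pi/2 - ?z) / (\<alpha>/2 * deriv (theta1 p) 0)"
      unfolding r1 brk_def e by simp
    also have "\<dots> = theta2 p ?z / (\<alpha>/2 * deriv (theta1 p) 0)" by (simp only: theta1_refl)
    also have "\<dots> = KK p \<alpha> r * (theta2 p ?z / theta2 p 0)" using t2 unfolding r1 KK_def by simp
    also have "theta2 p ?z / theta2 p 0 = brk p \<alpha> (piperm 2 r) x"
      unfolding r1 piperm_vals brk_def theta_def by simp
    finally show ?thesis .
  next
    assume r1: "r = 2"
    have "brk p \<alpha> r (pi/\<alpha> - x) = theta2 p (pi/2 - ?z) / theta2 p 0"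
      unfolding r1 brk_def e theta_def by simp
    also have "\<dots> = theta1 p ?z / theta2 p 0" by (simp only: theta2_refl)
    also have "\<dots> = KK p \<alpha> r * (theta1 p ?z / (\<alpha>/2 * deriv (theta1 p) 0))" using d a unfolding r1 KK_def by simp
    also have "theta1 p ?z / (\<alpha>/2 * deriv (theta1 p) 0) = brk p \<alpha> (piperm 2 r) x"
      unfolding r1 piperm_vals brk_def theta_def by simp
    finally show ?thesis .
  next
    assume r1: "r = 3"
    have "brk p \<alpha> r (pi/\<alpha> - x) = theta3 p (pi/2 - ?z) / theta3 p 0"
      unfolding r1 brk_def e theta_def by simp
    also have "\<dots> = theta4 p ?z / theta3 p 0" by (simp only: theta3_refl)
    also have "\<dots> = KK p \<alpha> r * (theta4 p ?z / theta4 p 0)" using t4 unfolding r1 KK_def by simp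
    also have "theta4 p ?z / theta4 p 0 = brk p \<alpha> (piperm 2 r) x"
      unfolding r1 piperm_vals brk_def theta_def by simp
    finally show ?thesis .
  next
    assume r1: "r = 4"
    have "brk p \<alpha> r (pi/\<alpha> - x) = theta4 p (pi/2 - ?z) / theta4 p 0"
      unfolding r1 brk_def e theta_def by simp
    also have "\<dots> = theta3 p ?z / theta4 p 0" by (simp only: theta4_refl)
    also have "\<dots> = KK p \<alpha> r * (theta3 p ?z / theta3 p 0)" using t3 unfolding r1 KK_def by simp
    also have "theta3 p ?z / theta3 p 0 = brk p \<alpha> (piperm 2 r) x"
      unfolding r1 piperm_vals brk_def theta_def by simp
    finally show ?thesis .
  qed
qed

lemma brk1_pos: "0 < z \<Longrightarrow> z < 2 * pi / \<alpha> \<Longrightarrow> brk p \<alpha> 1 z > 0"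
proof -
  assume z: "0 < z" "z < 2 * pi / \<alpha>"
  have "0 < \<alpha>/2 * z" using a z by simp
  moreover have "\<alpha>/2 * z < pi" using a z by (simp add: field_simps)
  ultimately have "theta1 p (\<alpha>/2 * z) > 0" by (rule theta1_pos[OF p])
  then show ?thesis using d_pos a by (simp add: brk_def)
qed

lemma brk2_pos: "\<bar>z\<bar> < pi / \<alpha> \<Longrightarrow> brk p \<alpha> 2 z > 0"
proof -
  assume z: "\<bar>z\<bar> < pi / \<alpha>"
  have "\<bar>\<alpha>/2 * z\<bar> < pi/2" using a z by (simp add: field_simps abs_mult)
  then have "theta2 p (\<alpha>/2 * z) > 0" using theta2_pos[OF p] by (simp add: abs_less_iff)
  then show ?thesis using t2_0 by (simp add: brk_def theta_def)
qed

lemma brk34_pos: "r = 3 \<or> r = 4 \<Longrightarrow> brk p \<alpha> r z > 0"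
  using theta3_pos[OF p] theta4_pos[OF p] by (auto simp: brk_def theta_def)

end

lemma alg_cancel:
  fixes c K a1 a2 a3 a4 :: real
  assumes "K \<noteq> 0"
  shows "c * (K * a1) * (K * a2) / ((K * a3) * (K * a4)) = c * a2 * a1 / (a4 * a3)"
proof -
  have "c * (K * a1) * (K * a2) / ((K * a3) * (K * a4)) = (K * K) * (c * a2 * a1) / ((K * K) * (a4 * a3))"
    by (simp add: algebra_simps)
  also have "\<dots> = c * a2 * a1 / (a4 * a3)" using assms by simp
  finally show ?thesis .
qed


lemma alpha_facts:
  assumes "u 1 > 0" "u 2 > 0"
  shows "alpha u M > 0" "pi / alpha u M = u 1 + u 2 + real M" "2 * pi / alpha u M = 2 * (u 1 + u 2 + real M)"
proof -
  have S: "u 1 + u 2 + real M > 0" using assms by simp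
  show "alpha u M > 0" using S by (simp add: alpha_def)
  show "pi / alpha u M = u 1 + u 2 + real M" using S by (simp add: alpha_def)
  moreover have "2 * pi / alpha u M = 2 * (pi / alpha u M)" by simp
  ultimately show "2 * pi / alpha u M = 2 * (u 1 + u 2 + real M)" by simp
qed

lemma acoef_pos:
  assumes p: "0 < p" "p < 1" and u1: "u 1 > 0" and u2: "u 2 > 0"
    and v1: "\<bar>v 1\<bar> < u 1 + 1/2" and v2: "\<bar>v 2\<bar> < u 2 + 1/2"
    and k: "1 \<le> k" "k \<le> M"
  shows "acoef p u v M (int k) > 0"
proof -
  let ?a = "alpha u M"
  let ?B = "brk p ?a"
  have a: "?a > 0" and X: "pi / ?a = u 1 + u 2 + real M" and X2: "2 * pi / ?a = 2 * (u 1 + u 2 + real M)"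
    using alpha_facts[OF u1 u2] by auto
  have kr: "1 \<le> real k" "real k \<le> real M" using k by auto
  have fpos: "?B r (u 1 - u r + real k) * ?B r (u 1 - v r - 1/2 + real k)
      / (?B r (u 1 + real k) * ?B r (u 1 - 1/2 + real k)) > 0" if r: "r \<in> {1..4}" for r
  proof -
    from r have "r = 1 \<or> r = 2 \<or> r = 3 \<or> r = 4" by auto
    then show ?thesis
    proof (elim disjE)
      assume r1: "r = 1"
      have "?B 1 (u 1 - u 1 + real k) > 0" by (rule brk1_pos[OF p a]) (use kr u1 u2 X2 in auto)
      moreover have "?B 1 (u 1 - v 1 - 1/2 + real k) > 0" by (rule brk1_pos[OF p a]) (use kr u1 u2 v1 X2 in \<open>auto simp: abs_less_iff\<close>)
      moreover have "?B 1 (u 1 + real k) > 0" by (rule brk1_pos[OF p a]) (use kr u1 u2 X2 in auto)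
      moreover have "?B 1 (u 1 - 1/2 + real k) > 0" by (rule brk1_pos[OF p a]) (use kr u1 u2 X2 in auto)
      ultimately show ?thesis unfolding r1 by simp
    next
      assume r1: "r = 2"
      have "?B 2 (u 1 - u 2 + real k) > 0" by (rule brk2_pos[OF p a]) (use kr u1 u2 X in \<open>auto simp: abs_less_iff\<close>)
      moreover have "?B 2 (u 1 - v 2 - 1/2 + real k) > 0" by (rule brk2_pos[OF p a]) (use kr u1 u2 v2 X in \<open>auto simp: abs_less_iff\<close>)
      moreover have "?B 2 (u 1 + real k) > 0" by (rule brk2_pos[OF p a]) (use kr u1 u2 X in \<open>auto simp: abs_less_iff\<close>)
      moreover have "?B 2 (u 1 - 1/2 + real k) > 0" by (rule brk2_pos[OF p a]) (use kr u1 u2 X in \<open>auto simp: abs_less_iff\<close>)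
      ultimately show ?thesis unfolding r1 by simp
    next
      assume r1: "r = 3"
      show ?thesis unfolding r1 using brk34_pos[OF p a] by simp
    next
      assume r1: "r = 4"
      show ?thesis unfolding r1 using brk34_pos[OF p a] by simp
    qed
  qed
  show ?thesis unfolding acoef_def Let_def
    by (rule prod_pos) (use fpos in simp)
qed

lemma piperm2_mem: "r \<in> {1..4} \<Longrightarrow> piperm 2 r \<in> {1..4::nat}"
proof -
  assume "r \<in> {1..4}"
  then have "r = 1 \<or> r = 2 \<or> r = 3 \<or> r = 4" by auto
  then show ?thesis by (auto simp: piperm_def)
qed

lemma cc_twist:
  assumes r: "r \<in> {1..4}"
  shows "cc p (twist u) (twist v) M w r = cc p u v M w (piperm 2 r)"
proof -
  have "(\<Prod>s\<in>{1..4}. brk p (alpha u M) s (twist u (piperm r s) - 1/2) * brk p (alpha u M) s (twist v (piperm r s)))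
      = (\<Prod>s\<in>{1..4}. brk p (alpha u M) s (u (piperm (piperm 2 r) s) - 1/2) * brk p (alpha u M) s (v (piperm (piperm 2 r) s)))"
    by (rule prod.cong[OF refl]) (simp add: Defs.twist_def piperm_comp[OF r])
  then show ?thesis unfolding cc_def Let_def alpha_twist by simp
qed

lemma bcoef_twist:
  assumes p: "0 < p" "p < 1" and u1: "u 1 > 0" and u2: "u 2 > 0" and i: "i \<le> M"
  shows "bcoef p (twist u) (twist v) M w (int i) = bcoef p u v M w (int (M - i))"
proof -
  let ?a = "alpha u M"
  let ?B = "brk p ?a"
  have a: "?a > 0" and X: "pi / ?a = u 1 + u 2 + real M"
    using alpha_facts[OF u1 u2] by auto
  define c where "c r = cc p u v M w r" for r
  define T where "T s = ?B s (u 2 + real i + 1/2 + w) * ?B s (u 2 + real i - 1/2 - w)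
      / (?B s (u 2 + real i + 1/2) * ?B s (u 2 + real i - 1/2))" for s
  have L: "bcoef p (twist u) (twist v) M w (int i) = (\<Sum>r\<in>{1..4}. c (piperm 2 r) * T r)"
    unfolding bcoef_def Let_def alpha_twist twist_12
    by (rule sum.cong[OF refl]) (simp add: cc_twist c_def T_def)
  have mi: "real (M - i) = real M - real i" using i by simp
  have e1: "u 1 + real (M - i) + 1/2 + w = pi / ?a - (u 2 + real i - 1/2 - w)" using X mi by simp
  have e2: "u 1 + real (M - i) - 1/2 - w = pi / ?a - (u 2 + real i + 1/2 + w)" using X mi by simp
  have e3: "u 1 + real (M - i) + 1/2 = pi / ?a - (u 2 + real i - 1/2)" using X mi by simp
  have e4: "u 1 + real (M - i) - 1/2 = pi / ?a - (u 2 + real i + 1/2)" using X mi by simp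
  have R: "bcoef p u v M w (int (M - i)) = (\<Sum>r\<in>{1..4}. c r * T (piperm 2 r))"
    unfolding bcoef_def Let_def
  proof (rule sum.cong[OF refl])
    fix r :: nat assume r: "r \<in> {1..4}"
    have "cc p u v M w r * ?B r (u 1 + real_of_int (int (M - i)) + 1/2 + w) * ?B r (u 1 + real_of_int (int (M - i)) - 1/2 - w)
        / (?B r (u 1 + real_of_int (int (M - i)) + 1/2) * ?B r (u 1 + real_of_int (int (M - i)) - 1/2))
      = c r * (KK p ?a r * ?B (piperm 2 r) (u 2 + real i - 1/2 - w)) * (KK p ?a r * ?B (piperm 2 r) (u 2 + real i + 1/2 + w))
        / ((KK p ?a r * ?B (piperm 2 r) (u 2 + real i - 1/2)) * (KK p ?a r * ?B (piperm 2 r) (u 2 + real i + 1/2)))"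
      by (simp only: of_int_of_nat_eq e1 e2, simp only: e3 e4 brk_refl[OF p a r] c_def)
    also have "\<dots> = c r * T (piperm 2 r)"
      by (simp only: alg_cancel[OF KK_nz[OF p a]] T_def) (simp add: algebra_simps)
    finally show "cc p u v M w r * ?B r (u 1 + real_of_int (int (M - i)) + 1/2 + w) * ?B r (u 1 + real_of_int (int (M - i)) - 1/2 - w)
        / (?B r (u 1 + real_of_int (int (M - i)) + 1/2) * ?B r (u 1 + real_of_int (int (M - i)) - 1/2)) = c r * T (piperm 2 r)" .
  qed
  have "(\<Sum>r\<in>{1..4}. c r * T (piperm 2 r)) = (\<Sum>r\<in>{1..4}. c (piperm 2 r) * T r)"
    by (rule sum.reindex_bij_witness[of _ "piperm 2" "piperm 2"]) (simp_all only: piperm_invol piperm2_mem)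
  then show ?thesis using L R by simp
qed


lemma prod_rev_index:
  fixes f :: "nat \<Rightarrow> real"
  shows "(\<Prod>j<M. f (M - j)) = (\<Prod>k\<in>{1..M}. f k)"
  by (rule prod.reindex_bij_witness[of _ "\<lambda>k. M - k" "\<lambda>j. M - j"]) auto

lemma prod_inv_rev:
  fixes f :: "nat \<Rightarrow> real"
  shows "(\<Prod>j<M. inverse (f (M - j))) = inverse (\<Prod>k\<in>{1..M}. f k)"
proof -
  have "(\<Prod>j<M. inverse (f (M - j))) = (\<Prod>k\<in>{1..M}. inverse (f k))"
    by (rule prod_rev_index)
  also have "\<dots> = inverse (\<Prod>k\<in>{1..M}. f k)"
    using prod_inversef[of f "{1..M}"] by (simp add: o_def)
  finally show ?thesis .
qed

theorem mainTheorem6: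
  fixes p :: real and u v :: "nat \<Rightarrow> real" and M :: nat and w :: real
  assumes "0 < p" "p < 1"
    and "u 1 > 0" "u 2 > 0" "\<bar>v 1\<bar> < u 1 + 1/2" "\<bar>v 2\<bar> < u 2 + 1/2"
    and "M \<ge> 1"
    and "\<forall>n::int. w \<noteq> 2 * pi / alpha u M * n" "\<forall>n::int. w + 1 \<noteq> 2 * pi / alpha u M * n"
  shows "\<forall>j\<le>M.
    (let E = Eig p u v M w j;
         eps = ppoly p (twist u) (twist v) M w M E / (\<Prod>k\<in>{1..M}. acoef p u v M (int k));
         epst = ppoly p u v M w M E / (\<Prod>k\<in>{1..M}. atil p u v M (int k))
     in Eig p (twist u) (twist v) M w j = E
        \<and> (\<forall>k\<le>M. fvec p (twist u) (twist v) M w k E = eps * fvec p u v M w (M - k) E)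
        \<and> eps * epst = 1 \<and> sgn eps = (-1)^j \<and> sgn epst = (-1)^j)"
proof (intro allI impI)
  fix j assume j: "j \<le> M"
  note p = assms(1,2)
  note u1 = assms(3) and u2 = assms(4) and v1 = assms(5) and v2 = assms(6) and M1 = assms(7)
  define a where "a k = acoef p u v M (int k)" for k
  define ta where "ta k = atil p u v M (int k)" for k
  define b where "b k = bcoef p u v M w (int k)" for k
  define bt where "bt k = bcoef p (twist u) (twist v) M w (int k)" for k
  have apos: "\<And>k. 1 \<le> k \<Longrightarrow> k \<le> M \<Longrightarrow> a k > 0"
    unfolding a_def by (rule acoef_pos[OF p u1 u2 v1 v2])
  have tapos: "\<And>k. 1 \<le> k \<Longrightarrow> k \<le> M \<Longrightarrow> ta k > 0"
  proof -
    fix k :: nat assume k: "1 \<le> k" "k \<le> M"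
    have h1: "twist u 1 > 0" using u2 by (simp only: twist_12)
    have h2: "twist u 2 > 0" using u1 by (simp only: twist_12)
    have h3: "\<bar>twist v 1\<bar> < twist u 1 + 1/2" using v2 by (simp only: twist_12)
    have h4: "\<bar>twist v 2\<bar> < twist u 2 + 1/2" using v1 by (simp only: twist_12)
    have "acoef p (twist u) (twist v) M (int k) > 0"
      by (rule acoef_pos[OF p h1 h2 h3 h4 k])
    then show "ta k > 0" by (simp add: ta_def atil_def)
  qed
  have bsym: "\<And>i. i \<le> M \<Longrightarrow> bt i = b (M - i)"
    unfolding bt_def b_def by (rule bcoef_twist[OF p u1 u2])
  have H: "Hent p u v M w i k = hh M a ta b i k" for i k
    by (auto simp: Hent_def hh_def a_def ta_def b_def of_nat_diff)
  have Ht: "Hent p (twist u) (twist v) M w i k = hh M ta a bt i k" for i k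
    by (auto simp: Hent_def hh_def a_def ta_def bt_def of_nat_diff atil_twist atil_def[symmetric])
  have pp: "ppoly p u v M w k x = DD M a ta b k x" for k x
    unfolding ppoly_def DD_def Dm_def H ..
  have ppt: "ppoly p (twist u) (twist v) M w k x = DD M ta a bt k x" for k x
    unfolding ppoly_def DD_def Dm_def Ht ..
  have fv: "fvec p u v M w k x = gg M a ta b x k" if "k \<le> M" for k x
  proof -
    have "(\<Prod>i<k. inverse (atil p u v M (int M - int i))) = (\<Prod>i<k. inverse (ta (M - i)))"
      by (rule prod.cong[OF refl]) (use that in \<open>simp add: ta_def of_nat_diff\<close>)
    then show ?thesis unfolding fvec_def gg_def pp by simp
  qed
  have fvt: "fvec p (twist u) (twist v) M w k x = gg M ta a bt x k" if "k \<le> M" for k x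
  proof -
    have "(\<Prod>i<k. inverse (atil p (twist u) (twist v) M (int M - int i))) = (\<Prod>i<k. inverse (a (M - i)))"
      by (rule prod.cong[OF refl]) (use that in \<open>simp add: a_def of_nat_diff atil_twist\<close>)
    then show ?thesis unfolding fvec_def gg_def ppt by simp
  qed
  define Z where "Z = {x. DD M a ta b (Suc M) x = 0}"
  have AF1: "{x. DD M ta a bt (Suc M) x = 0} = Z" unfolding Z_def
    by (rule abs_final(1)[where M=M and a=a and ta=ta and b=b and bt=bt]) (fact M1 apos tapos bsym)+
  have AF2: "finite Z" unfolding Z_def
    by (rule abs_final(2)[where M=M and a=a and ta=ta and b=b and bt=bt]) (fact M1 apos tapos bsym)+
  have AF3: "card Z = Suc M" unfolding Z_def
    by (rule abs_final(3)[where M=M and a=a and ta=ta and b=b and bt=bt]) (fact M1 apos tapos bsym)+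
  have AF4: "gg M ta a bt E' k = gg M ta a bt E' M * gg M a ta b E' (M - k)" if "E' \<in> Z" "k \<le> M" for E' k
    by (rule abs_final(4)[where M=M and a=a and ta=ta and b=b and bt=bt]) (use M1 apos tapos bsym that in \<open>auto simp: Z_def\<close>)
  have AF5: "gg M ta a bt E' M * gg M a ta b E' M = 1" if "E' \<in> Z" for E'
    by (rule abs_final(5)[where M=M and a=a and ta=ta and b=b and bt=bt]) (use M1 apos tapos bsym that in \<open>auto simp: Z_def\<close>)
  have AF6: "sgn (gg M a ta b E' M) = (-1) ^ card {y\<in>Z. E' < y}" if "E' \<in> Z" for E'
    unfolding Z_def by (rule abs_final(6)[where M=M and a=a and ta=ta and b=b and bt=bt]) (use M1 apos tapos bsym that in \<open>auto simp: Z_def\<close>)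
  have HM: "Hmat p u v M w = mat (Suc M) (Suc M) (\<lambda>(i,k). hh M a ta b i k)"
    unfolding Hmat_def H by simp
  have HMt: "Hmat p (twist u) (twist v) M w = mat (Suc M) (Suc M) (\<lambda>(i,k). hh M ta a bt i k)"
    unfolding Hmat_def Ht by simp
  have eigZ: "{e. eigenvalue (Hmat p u v M w) e} = Z"
  proof -
    have "eigenvalue (Hmat p u v M w) e \<longleftrightarrow> DD M a ta b (Suc M) e = 0" for e
      unfolding HM DD_def Dm_poly by (rule eigenvalue_root_char_poly[where n="Suc M"]) simp
    then show ?thesis unfolding Z_def by simp
  qed
  have eigZt: "{e. eigenvalue (Hmat p (twist u) (twist v) M w) e} = Z"
  proof -
    have "eigenvalue (Hmat p (twist u) (twist v) M w) e \<longleftrightarrow> DD M ta a bt (Suc M) e = 0" for e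
      unfolding HMt DD_def Dm_poly by (rule eigenvalue_root_char_poly[where n="Suc M"]) simp
    then show ?thesis using AF1 by simp
  qed
  define E where "E = Eig p u v M w j"
  have E_eq: "E = rev (sorted_list_of_set Z) ! j" unfolding E_def Eig_def eigZ ..
  have Et: "Eig p (twist u) (twist v) M w j = E" unfolding E_eq Eig_def eigZt ..
  have EZ: "E \<in> Z" and cnt: "card {y\<in>Z. E < y} = j"
    using rev_sorted_count[OF AF2 AF3, of j] j unfolding E_eq by auto
  define eps where "eps = ppoly p (twist u) (twist v) M w M E / (\<Prod>k\<in>{1..M}. acoef p u v M (int k))"
  define epst where "epst = ppoly p u v M w M E / (\<Prod>k\<in>{1..M}. atil p u v M (int k))"
  have Pa: "(\<Prod>j<M. inverse (a (M - j))) = inverse (\<Prod>k\<in>{1..M}. acoef p u v M (int k))"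
    using prod_inv_rev[of a M] unfolding a_def .
  have Pt: "(\<Prod>j<M. inverse (ta (M - j))) = inverse (\<Prod>k\<in>{1..M}. atil p u v M (int k))"
    using prod_inv_rev[of ta M] unfolding ta_def .
  have eps_g: "eps = gg M ta a bt E M"
    unfolding eps_def gg_def ppt Pa by (simp add: divide_inverse)
  have epst_g: "epst = gg M a ta b E M"
    unfolding epst_def gg_def pp Pt by (simp add: divide_inverse)
  have one: "eps * epst = 1" unfolding eps_g epst_g by (rule AF5[OF EZ])
  have s2: "sgn epst = (-1)^j" unfolding epst_g using AF6[OF EZ] cnt by simp
  have s1: "sgn eps = (-1)^j"
  proof -
    have "sgn eps * sgn epst = 1" using one by (metis sgn_mult sgn_one)
    then have "sgn eps * (-1)^j = 1" using s2 by simp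
    moreover have "(-1::real)^j * (-1)^j = 1" by (simp add: power_mult_distrib[symmetric])
    ultimately show ?thesis by (metis mult.commute mult.left_neutral mult.assoc)
  qed
  have fvrel: "\<forall>k\<le>M. fvec p (twist u) (twist v) M w k E = eps * fvec p u v M w (M - k) E"
  proof (intro allI impI)
    fix k assume k: "k \<le> M"
    show "fvec p (twist u) (twist v) M w k E = eps * fvec p u v M w (M - k) E"
      unfolding fvt[OF k] fv[OF diff_le_self] eps_g using AF4[OF EZ k] by simp
  qed
  have "Eig p (twist u) (twist v) M w j = E
        \<and> (\<forall>k\<le>M. fvec p (twist u) (twist v) M w k E = eps * fvec p u v M w (M - k) E)
        \<and> eps * epst = 1 \<and> sgn eps = (-1)^j \<and> sgn epst = (-1)^j"
    using Et fvrel one s1 s2 by blast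
  then show "let E = Eig p u v M w j;
         eps = ppoly p (twist u) (twist v) M w M E / (\<Prod>k\<in>{1..M}. acoef p u v M (int k));
         epst = ppoly p u v M w M E / (\<Prod>k\<in>{1..M}. atil p u v M (int k))
     in Eig p (twist u) (twist v) M w j = E
        \<and> (\<forall>k\<le>M. fvec p (twist u) (twist v) M w k E = eps * fvec p u v M w (M - k) E)
        \<and> eps * epst = 1 \<and> sgn eps = (-1)^j \<and> sgn epst = (-1)^j"
    unfolding Let_def eps_def epst_def E_def .
qed

end
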